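(* Let $m,n\ge 1$, $k\ge 2$ and $P\in\mathbb{R}[x_1,\ldots,x_n]$. There is exactly one polynomial $P_0\in V_{m,k}$ such that $P-P_0$ has a zero of multiplicity at least $k$ at every point of $mB^n\setminus\{\mathbf 0\}$ and a zero of multiplicity at least $k-1$ at $\mathbf 0$. This polynomial satisfies $\deg P_0\le \deg P$.
   Context: $mB^n=\{0,1,\ldots,m\}^n$. A polynomial $f$ has a zero of multiplicity at least $k$ at $\mathbf a$ if all partial derivatives of $f$ of order less than $k$ vanish at $\mathbf a$. For an integer $k\ge 2$, a polynomial $P\in\mathbb{R}[x_1,\ldots,x_n]$ is called $(m,k)$-reduced if two conditions hold: $\deg P\le mn+(m+1)(k-1)-1$, and no monomial of $P$ is divisible by $x_{i_1}^{m+1}\cdots x_{i_k}^{m+1}$ for any indices $i_1,\ldots,i_k$ (not necessarily distinct). $V_{m,k}$ is the space of all $(m,k)$-reduced polynomials. *)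

theory Defs
  imports "HOL-Library.Poly_Mapping" Complex_Main
begin

text \<open>Multivariate real polynomials in variables x_0, x_1, ... (index i stands for x_(i+1)),
  represented as finitely supported maps from exponent vectors (monomials) to coefficients.\<close>

type_synonym mpoly = "(nat \<Rightarrow>\<^sub>0 nat) \<Rightarrow>\<^sub>0 real"

definition mvars :: "mpoly \<Rightarrow> nat set" where
  "mvars P = \<Union> ((\<lambda>\<alpha>::nat \<Rightarrow>\<^sub>0 nat. Poly_Mapping.keys \<alpha>) ` Poly_Mapping.keys P)"

definition mon_deg :: "(nat \<Rightarrow>\<^sub>0 nat) \<Rightarrow> nat" where
  "mon_deg \<alpha> = (\<Sum>v\<in>Poly_Mapping.keys \<alpha>. Poly_Mapping.lookup \<alpha> v)"

text \<open>Total degree (degree of the zero polynomial taken to be 0).\<close>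
definition mdeg :: "mpoly \<Rightarrow> nat" where
  "mdeg P = Max (insert 0 (mon_deg ` Poly_Mapping.keys P))"

definition meval :: "mpoly \<Rightarrow> (nat \<Rightarrow> real) \<Rightarrow> real" where
  "meval P a = (\<Sum>\<alpha>\<in>Poly_Mapping.keys P. Poly_Mapping.lookup P \<alpha> * (\<Prod>v\<in>Poly_Mapping.keys \<alpha>. a v ^ Poly_Mapping.lookup \<alpha> v))"

definition mpderiv :: "nat \<Rightarrow> mpoly \<Rightarrow> mpoly" where
  "mpderiv i P = (\<Sum>\<alpha>\<in>Poly_Mapping.keys P.
      Poly_Mapping.single (\<alpha> - Poly_Mapping.single i 1) (Poly_Mapping.lookup P \<alpha> * of_nat (Poly_Mapping.lookup \<alpha> i)))"

definition zero_mult_ge :: "nat \<Rightarrow> nat \<Rightarrow> mpoly \<Rightarrow> (nat \<Rightarrow> real) \<Rightarrow> bool" where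
  "zero_mult_ge n k P a \<longleftrightarrow>
     (\<forall>is. length is < k \<longrightarrow> set is \<subseteq> {..<n} \<longrightarrow> meval (foldr mpderiv is P) a = 0)"

definition grid :: "nat \<Rightarrow> nat \<Rightarrow> (nat \<Rightarrow> real) set" where
  "grid m n = {a. (\<forall>i<n. a i \<in> real ` {0..m}) \<and> (\<forall>i\<ge>n. a i = 0)}"

definition reduced :: "nat \<Rightarrow> nat \<Rightarrow> nat \<Rightarrow> mpoly \<Rightarrow> bool" where
  "reduced n m k P \<longleftrightarrow>
     mvars P \<subseteq> {..<n} \<and>
     mdeg P \<le> m * n + (m + 1) * (k - 1) - 1 \<and>
     (\<forall>\<alpha>\<in>Poly_Mapping.keys P. \<not> (\<exists>is. length is = k \<and> set is \<subseteq> {..<n} \<and>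
        (\<forall>v. Poly_Mapping.lookup (\<Sum>j\<leftarrow>is. Poly_Mapping.single j (m + 1)) v \<le> Poly_Mapping.lookup \<alpha> v)))"

end

theory Submission
  imports Defs "HOL-Computational_Algebra.Polynomial"
begin


lemma mpoly_expand: "(P::mpoly) = (\<Sum>\<alpha>\<in>Poly_Mapping.keys P. Poly_Mapping.single \<alpha> (Poly_Mapping.lookup P \<alpha>))"
proof (rule poly_mapping_eqI)
  fix \<gamma>
  have "Poly_Mapping.lookup (\<Sum>\<alpha>\<in>Poly_Mapping.keys P. Poly_Mapping.single \<alpha> (Poly_Mapping.lookup P \<alpha>)) \<gamma>
      = (\<Sum>\<alpha>\<in>Poly_Mapping.keys P. (if \<alpha> = \<gamma> then Poly_Mapping.lookup P \<alpha> else 0))"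
    by (simp add: lookup_sum lookup_single when_def)
  also have "\<dots> = Poly_Mapping.lookup P \<gamma>"
    by (simp add: sum.delta in_keys_iff)
  finally show "Poly_Mapping.lookup P \<gamma> = Poly_Mapping.lookup (\<Sum>\<alpha>\<in>Poly_Mapping.keys P. Poly_Mapping.single \<alpha> (Poly_Mapping.lookup P \<alpha>)) \<gamma>" by simp
qed

lemma mpderiv_superset:
  assumes "finite S" "Poly_Mapping.keys P \<subseteq> S"
  shows "mpderiv i P = (\<Sum>\<alpha>\<in>S. Poly_Mapping.single (\<alpha> - Poly_Mapping.single i 1) (Poly_Mapping.lookup P \<alpha> * of_nat (Poly_Mapping.lookup \<alpha> i)))"
  unfolding mpderiv_def
  by (rule sum.mono_neutral_left) (use assms in \<open>auto simp: in_keys_iff\<close>)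

lemma meval_superset:
  assumes "finite S" "Poly_Mapping.keys P \<subseteq> S"
  shows "meval P a = (\<Sum>\<alpha>\<in>S. Poly_Mapping.lookup P \<alpha> * (\<Prod>v\<in>Poly_Mapping.keys \<alpha>. a v ^ Poly_Mapping.lookup \<alpha> v))"
  unfolding meval_def
  by (rule sum.mono_neutral_left) (use assms in \<open>auto simp: in_keys_iff\<close>)

lemma mpderiv_add: "mpderiv i (P + Q) = mpderiv i P + mpderiv i Q"
proof -
  let ?S = "Poly_Mapping.keys P \<union> Poly_Mapping.keys Q"
  have k: "Poly_Mapping.keys (P + Q) \<subseteq> ?S" by (rule keys_add)
  show ?thesis
    by (simp add: mpderiv_superset[OF _ k] mpderiv_superset[of ?S P] mpderiv_superset[of ?S Q]
        lookup_add distrib_right single_add sum.distrib)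
qed

lemma mpderiv_zero[simp]: "mpderiv i 0 = 0"
  by (simp add: mpderiv_def)

lemma mpderiv_single: "mpderiv i (Poly_Mapping.single \<alpha> c) = Poly_Mapping.single (\<alpha> - Poly_Mapping.single i 1) (c * of_nat (Poly_Mapping.lookup \<alpha> i))"
  by (subst mpderiv_superset[of "{\<alpha>}"]) auto

lemma mpderiv_sum: "mpderiv i (\<Sum>x\<in>A. f x) = (\<Sum>x\<in>A. mpderiv i (f x))"
  by (induction A rule: infinite_finite_induct) (auto simp: mpderiv_add)

lemma mpderiv_uminus: "mpderiv i (- P) = - mpderiv i P"
  by (metis add_eq_0_iff2 mpderiv_add mpderiv_zero)

lemma mpderiv_diff: "mpderiv i (P - Q) = mpderiv i P - mpderiv i Q"
  by (metis diff_conv_add_uminus mpderiv_add mpderiv_uminus)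

lemma meval_add: "meval (P + Q) a = meval P a + meval Q a"
proof -
  let ?S = "Poly_Mapping.keys P \<union> Poly_Mapping.keys Q"
  have k: "Poly_Mapping.keys (P + Q) \<subseteq> ?S" by (rule keys_add)
  show ?thesis
    by (simp add: meval_superset[OF _ k] meval_superset[of ?S P] meval_superset[of ?S Q]
        lookup_add distrib_right sum.distrib)
qed

lemma meval_zero[simp]: "meval 0 a = 0"
  by (simp add: meval_def)

definition mono_ev :: "(nat \<Rightarrow>\<^sub>0 nat) \<Rightarrow> (nat \<Rightarrow> real) \<Rightarrow> real" where
  "mono_ev \<alpha> a = (\<Prod>v\<in>Poly_Mapping.keys \<alpha>. a v ^ Poly_Mapping.lookup \<alpha> v)"

lemma mono_ev_superset:
  assumes "finite S" "Poly_Mapping.keys \<alpha> \<subseteq> S"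
  shows "mono_ev \<alpha> a = (\<Prod>v\<in>S. a v ^ Poly_Mapping.lookup \<alpha> v)"
  unfolding mono_ev_def
  by (rule prod.mono_neutral_left) (use assms in \<open>auto simp: in_keys_iff\<close>)

lemma mono_ev_add: "mono_ev (\<alpha> + \<beta>) a = mono_ev \<alpha> a * mono_ev \<beta> a"
proof -
  let ?S = "Poly_Mapping.keys \<alpha> \<union> Poly_Mapping.keys \<beta>"
  have k: "Poly_Mapping.keys (\<alpha> + \<beta>) \<subseteq> ?S" by (rule keys_add)
  show ?thesis
    by (simp add: mono_ev_superset[OF _ k] mono_ev_superset[of ?S \<alpha>] mono_ev_superset[of ?S \<beta>]
        lookup_add power_add prod.distrib)
qed

lemma mono_ev_zero[simp]: "mono_ev 0 a = 1"
  by (simp add: mono_ev_def)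

lemma meval_single: "meval (Poly_Mapping.single \<alpha> c) a = c * mono_ev \<alpha> a"
  by (subst meval_superset[of "{\<alpha>}"]) (auto simp: mono_ev_def)

lemma meval_sum: "meval (\<Sum>x\<in>A. f x) a = (\<Sum>x\<in>A. meval (f x) a)"
  by (induction A rule: infinite_finite_induct) (auto simp: meval_add)

lemma meval_uminus: "meval (- P) a = - meval P a"
  by (metis add_eq_0_iff2 meval_add meval_zero)

lemma meval_diff: "meval (P - Q) a = meval P a - meval Q a"
  by (metis diff_conv_add_uminus meval_add meval_uminus)

lemma mult_expand: "(P::mpoly) * Q = (\<Sum>\<alpha>\<in>Poly_Mapping.keys P. \<Sum>\<beta>\<in>Poly_Mapping.keys Q.
    Poly_Mapping.single (\<alpha> + \<beta>) (Poly_Mapping.lookup P \<alpha> * Poly_Mapping.lookup Q \<beta>))"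
  apply (subst mpoly_expand[of P], subst mpoly_expand[of Q])
  by (simp add: sum_product mult_single)

lemma meval_alt: "meval P a = (\<Sum>\<alpha>\<in>Poly_Mapping.keys P. Poly_Mapping.lookup P \<alpha> * mono_ev \<alpha> a)"
  by (simp add: meval_def mono_ev_def)

lemma meval_mult: "meval (P * Q) a = meval P a * meval Q a"
proof -
  have "meval (P * Q) a = (\<Sum>\<alpha>\<in>Poly_Mapping.keys P. \<Sum>\<beta>\<in>Poly_Mapping.keys Q.
     Poly_Mapping.lookup P \<alpha> * Poly_Mapping.lookup Q \<beta> * (mono_ev \<alpha> a * mono_ev \<beta> a))"
    by (simp add: mult_expand meval_sum meval_single mono_ev_add)
  also have "\<dots> = meval P a * meval Q a"
    by (simp add: meval_alt sum_product algebra_simps)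
  finally show ?thesis .
qed

lemma mpderiv_single_mult:
  "mpderiv i (Poly_Mapping.single \<alpha> a * Poly_Mapping.single \<beta> b) =
     mpderiv i (Poly_Mapping.single \<alpha> a) * Poly_Mapping.single \<beta> b + Poly_Mapping.single \<alpha> a * mpderiv i (Poly_Mapping.single \<beta> b)"
proof -
  have e1: "Poly_Mapping.single (\<alpha> - Poly_Mapping.single i 1 + \<beta>) (a * of_nat (Poly_Mapping.lookup \<alpha> i) * b)
     = Poly_Mapping.single (\<alpha> + \<beta> - Poly_Mapping.single i 1) (a * b * of_nat (Poly_Mapping.lookup \<alpha> i))"
  proof (cases "Poly_Mapping.lookup \<alpha> i = 0")
    case False
    have "\<alpha> - Poly_Mapping.single i 1 + \<beta> = \<alpha> + \<beta> - Poly_Mapping.single i 1"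
      by (rule poly_mapping_eqI) (use False in \<open>auto simp: lookup_add lookup_minus lookup_single when_def\<close>)
    then show ?thesis by (simp add: algebra_simps)
  qed simp
  have e2: "Poly_Mapping.single (\<alpha> + (\<beta> - Poly_Mapping.single i 1)) (a * (b * of_nat (Poly_Mapping.lookup \<beta> i)))
     = Poly_Mapping.single (\<alpha> + \<beta> - Poly_Mapping.single i 1) (a * b * of_nat (Poly_Mapping.lookup \<beta> i))"
  proof (cases "Poly_Mapping.lookup \<beta> i = 0")
    case False
    have "\<alpha> + (\<beta> - Poly_Mapping.single i 1) = \<alpha> + \<beta> - Poly_Mapping.single i 1"
      by (rule poly_mapping_eqI) (use False in \<open>auto simp: lookup_add lookup_minus lookup_single when_def\<close>)
    then show ?thesis by (simp add: algebra_simps)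
  qed simp
  have "mpderiv i (Poly_Mapping.single \<alpha> a * Poly_Mapping.single \<beta> b) =
     Poly_Mapping.single (\<alpha> + \<beta> - Poly_Mapping.single i 1) (a * b * of_nat (Poly_Mapping.lookup \<alpha> i))
   + Poly_Mapping.single (\<alpha> + \<beta> - Poly_Mapping.single i 1) (a * b * of_nat (Poly_Mapping.lookup \<beta> i))"
    by (simp add: mult_single mpderiv_single lookup_add algebra_simps flip: single_add)
  also have "\<dots> = mpderiv i (Poly_Mapping.single \<alpha> a) * Poly_Mapping.single \<beta> b + Poly_Mapping.single \<alpha> a * mpderiv i (Poly_Mapping.single \<beta> b)"
    unfolding mpderiv_single mult_single e1 e2 ..
  finally show ?thesis .
qed

lemma mpderiv_mult: "mpderiv i (P * Q) = mpderiv i P * Q + P * mpderiv i Q"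
proof -
  have "P * Q = (\<Sum>\<alpha>\<in>Poly_Mapping.keys P. \<Sum>\<beta>\<in>Poly_Mapping.keys Q.
      Poly_Mapping.single \<alpha> (Poly_Mapping.lookup P \<alpha>) * Poly_Mapping.single \<beta> (Poly_Mapping.lookup Q \<beta>))"
    apply (subst mpoly_expand[of P], subst mpoly_expand[of Q])
    by (simp add: sum_product)
  then have "mpderiv i (P * Q) = (\<Sum>\<alpha>\<in>Poly_Mapping.keys P. \<Sum>\<beta>\<in>Poly_Mapping.keys Q.
      mpderiv i (Poly_Mapping.single \<alpha> (Poly_Mapping.lookup P \<alpha>)) * Poly_Mapping.single \<beta> (Poly_Mapping.lookup Q \<beta>)
    + Poly_Mapping.single \<alpha> (Poly_Mapping.lookup P \<alpha>) * mpderiv i (Poly_Mapping.single \<beta> (Poly_Mapping.lookup Q \<beta>)))"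
    by (simp add: mpderiv_sum mpderiv_single_mult)
  also have "\<dots> = (\<Sum>\<alpha>\<in>Poly_Mapping.keys P. mpderiv i (Poly_Mapping.single \<alpha> (Poly_Mapping.lookup P \<alpha>))) *
       (\<Sum>\<beta>\<in>Poly_Mapping.keys Q. Poly_Mapping.single \<beta> (Poly_Mapping.lookup Q \<beta>))
     + (\<Sum>\<alpha>\<in>Poly_Mapping.keys P. Poly_Mapping.single \<alpha> (Poly_Mapping.lookup P \<alpha>)) *
       (\<Sum>\<beta>\<in>Poly_Mapping.keys Q. mpderiv i (Poly_Mapping.single \<beta> (Poly_Mapping.lookup Q \<beta>)))"
    by (simp add: sum_product sum.distrib)
  also have "\<dots> = mpderiv i P * Q + P * mpderiv i Q"
    by (simp flip: mpoly_expand mpderiv_sum)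
  finally show ?thesis .
qed



abbreviation zm where "zm \<equiv> zero_mult_ge"

lemma zm_0[simp]: "zm n 0 f a"
  by (simp add: zero_mult_ge_def)

lemma zm_Suc: "zm n (Suc s) f a \<longleftrightarrow> meval f a = 0 \<and> (\<forall>i<n. zm n s (mpderiv i f) a)"
proof
  assume h: "zm n (Suc s) f a"
  have "meval f a = 0" using h[unfolded zero_mult_ge_def, rule_format, of "[]"] by simp
  moreover have "zm n s (mpderiv i f) a" if "i < n" for i
    unfolding zero_mult_ge_def
  proof (intro allI impI)
    fix "is" :: "nat list" assume "length is < s" "set is \<subseteq> {..<n}"
    then show "meval (foldr mpderiv is (mpderiv i f)) a = 0"
      using h[unfolded zero_mult_ge_def, rule_format, of "is @ [i]"] that by simp
  qed
  ultimately show "meval f a = 0 \<and> (\<forall>i<n. zm n s (mpderiv i f) a)" by blast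
next
  assume h: "meval f a = 0 \<and> (\<forall>i<n. zm n s (mpderiv i f) a)"
  show "zm n (Suc s) f a"
    unfolding zero_mult_ge_def
  proof (intro allI impI)
    fix "is" :: "nat list" assume l: "length is < Suc s" "set is \<subseteq> {..<n}"
    show "meval (foldr mpderiv is f) a = 0"
    proof (cases "is" rule: rev_exhaust)
      case Nil then show ?thesis using h by simp
    next
      case (snoc ys i)
      then have "zm n s (mpderiv i f) a" using h l by auto
      then show ?thesis using l snoc unfolding zero_mult_ge_def by simp
    qed
  qed
qed

lemma zm_1: "zm n 1 f a \<longleftrightarrow> meval f a = 0"
  by (simp add: zm_Suc)

lemma zm_mono: "zm n t f a \<Longrightarrow> s \<le> t \<Longrightarrow> zm n s f a"
  unfolding zero_mult_ge_def by auto

lemma foldr_mpderiv_add: "foldr mpderiv is (P + Q) = foldr mpderiv is P + foldr mpderiv is Q"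
  by (induction "is") (auto simp: mpderiv_add)

lemma foldr_mpderiv_uminus: "foldr mpderiv is (- P) = - foldr mpderiv is P"
  by (induction "is") (auto simp: mpderiv_uminus)

lemma foldr_mpderiv_zero: "foldr mpderiv is 0 = 0"
  by (induction "is") auto

lemma zm_add: "zm n s f a \<Longrightarrow> zm n s g a \<Longrightarrow> zm n s (f + g) a"
  unfolding zero_mult_ge_def by (simp add: foldr_mpderiv_add meval_add)

lemma zm_uminus: "zm n s f a \<Longrightarrow> zm n s (- f) a"
  unfolding zero_mult_ge_def by (simp add: foldr_mpderiv_uminus meval_uminus)

lemma zm_diff: "zm n s f a \<Longrightarrow> zm n s g a \<Longrightarrow> zm n s (f - g) a"
  by (metis diff_conv_add_uminus zm_add zm_uminus)

lemma zm_zero[simp]: "zm n s 0 a"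
  unfolding zero_mult_ge_def by (simp add: foldr_mpderiv_zero)

lemma zm_sum: "(\<And>x. x \<in> A \<Longrightarrow> zm n s (f x) a) \<Longrightarrow> zm n s (\<Sum>x\<in>A. f x) a"
  by (induction A rule: infinite_finite_induct) (auto intro: zm_add)

lemma zm_mult_aux: "s + t = N \<Longrightarrow> zm n s f a \<Longrightarrow> zm n t g a \<Longrightarrow> zm n N (f * g) a"
proof (induction N arbitrary: s t f g)
  case 0 then show ?case by simp
next
  case (Suc N)
  have ev: "meval (f * g) a = 0"
  proof (cases s)
    case 0 then have "t = Suc N" using Suc by simp
    then show ?thesis using Suc(4) by (simp add: zm_Suc meval_mult)
  next
    case (Suc s') then show ?thesis using \<open>zm n s f a\<close> by (simp add: zm_Suc meval_mult)
  qed
  have d1: "zm n N (mpderiv i f * g) a" if "i < n" for i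
  proof (cases s)
    case 0
    then have "zm n N g a" using Suc zm_mono[of n t g a N] by simp
    then show ?thesis using Suc.IH[of 0 N "mpderiv i f" g] by simp
  next
    case (Suc s')
    then have "zm n s' (mpderiv i f) a" using \<open>zm n s f a\<close> that by (simp add: zm_Suc)
    then show ?thesis using Suc.IH[of s' t "mpderiv i f" g] Suc.prems \<open>s = Suc s'\<close> by simp
  qed
  have d2: "zm n N (f * mpderiv i g) a" if "i < n" for i
  proof (cases t)
    case 0
    then have "zm n N f a" using Suc zm_mono[of n s f a N] by simp
    then show ?thesis using Suc.IH[of N 0 f "mpderiv i g"] by simp
  next
    case (Suc t')
    then have "zm n t' (mpderiv i g) a" using \<open>zm n t g a\<close> that by (simp add: zm_Suc)
    then show ?thesis using Suc.IH[of s t' f "mpderiv i g"] Suc.prems \<open>t = Suc t'\<close> by simp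
  qed
  show ?case using ev d1 d2 by (simp add: zm_Suc mpderiv_mult zm_add)
qed

lemma zm_mult: "zm n s f a \<Longrightarrow> zm n t g a \<Longrightarrow> zm n (s + t) (f * g) a"
  using zm_mult_aux by blast

lemma zm_mult_left: "zm n t g a \<Longrightarrow> zm n t (f * g) a"
  using zm_mult[of n 0 f a t g] by simp

lemma zm_mult_right: "zm n s f a \<Longrightarrow> zm n s (f * g) a"
  using zm_mult[of n s f a 0 g] by simp

lemma zm_prod: "finite S \<Longrightarrow> (\<And>x. x \<in> S \<Longrightarrow> zm n (od x) (f x) a) \<Longrightarrow> zm n (\<Sum>x\<in>S. od x) (\<Prod>x\<in>S. f x) a"
  by (induction S rule: finite_induct) (auto intro: zm_mult)

lemma zm_power: "zm n s f a \<Longrightarrow> zm n (e * s) (f ^ e) a"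
  by (induction e) (auto intro: zm_mult)



definition Xv :: "nat \<Rightarrow> mpoly" where "Xv i = Poly_Mapping.single (Poly_Mapping.single i 1) 1"
definition cst :: "real \<Rightarrow> mpoly" where "cst c = Poly_Mapping.single 0 c"
definition lin :: "nat \<Rightarrow> real \<Rightarrow> mpoly" where "lin i c = Xv i - cst c"
definition gp :: "nat \<Rightarrow> nat \<Rightarrow> mpoly" where "gp m i = (\<Prod>j\<in>{0..m}. lin i (real j))"
definition hp :: "nat \<Rightarrow> nat \<Rightarrow> mpoly" where "hp m i = (\<Prod>j\<in>{1..m}. lin i (real j))"
definition Gq :: "nat \<Rightarrow> nat \<Rightarrow> (nat \<Rightarrow> nat) \<Rightarrow> mpoly" where "Gq m n q = (\<Prod>i<n. gp m i ^ q i)"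
definition qs :: "nat \<Rightarrow> (nat \<Rightarrow> nat) \<Rightarrow> nat" where "qs n q = (\<Sum>i<n. q i)"

lemma cst_add: "cst (a + b) = cst a + cst b" by (simp add: cst_def single_add)
lemma cst_1[simp]: "cst 1 = 1" by (simp add: cst_def)
lemma cst_0[simp]: "cst 0 = 0" by (simp add: cst_def)
lemma cst_mult: "cst (a * b) = cst a * cst b" by (simp add: cst_def mult_single)

lemma meval_Xv[simp]: "meval (Xv i) a = a i"
  by (simp add: Xv_def meval_single mono_ev_def)
lemma meval_cst[simp]: "meval (cst c) a = c"
  by (simp add: cst_def meval_single)
lemma meval_one[simp]: "meval 1 a = 1"
  using meval_cst[of 1 a] by simp
lemma meval_lin[simp]: "meval (lin i c) a = a i - c"
  by (simp add: lin_def meval_diff)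
lemma meval_prod: "meval (\<Prod>x\<in>A. f x) a = (\<Prod>x\<in>A. meval (f x) a)"
  by (induction A rule: infinite_finite_induct) (auto simp: meval_mult)
lemma meval_power: "meval (f ^ e) a = meval f a ^ e"
  by (induction e) (auto simp: meval_mult)

lemma mpderiv_cst[simp]: "mpderiv i (cst c) = 0"
  by (simp add: cst_def mpderiv_single)
lemma mpderiv_one[simp]: "mpderiv i 1 = 0"
  using mpderiv_cst[of i 1] by simp
lemma mpderiv_Xv: "mpderiv i (Xv j) = (if i = j then 1 else 0)"
  by (auto simp: Xv_def mpderiv_single lookup_single)
lemma mpderiv_lin: "mpderiv i (lin j c) = (if i = j then 1 else 0)"
  by (simp add: lin_def mpderiv_diff mpderiv_Xv)

definition novar :: "nat \<Rightarrow> mpoly \<Rightarrow> bool" where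
  "novar i P \<longleftrightarrow> (\<forall>\<alpha>\<in>Poly_Mapping.keys P. Poly_Mapping.lookup \<alpha> i = 0)"

lemma novar_mpderiv: "novar i P \<Longrightarrow> mpderiv i P = 0"
  unfolding novar_def mpderiv_def by simp

lemma novar_mult: "novar i P \<Longrightarrow> novar i Q \<Longrightarrow> novar i (P * Q)"
  unfolding novar_def using keys_mult[of P Q] by (force simp: lookup_add)
lemma novar_one: "novar i 1"
  by (simp add: novar_def)
lemma novar_prod: "(\<And>x. x \<in> A \<Longrightarrow> novar i (f x)) \<Longrightarrow> novar i (\<Prod>x\<in>A. f x)"
  by (induction A rule: infinite_finite_induct) (auto intro: novar_mult novar_one)
lemma novar_power: "novar i P \<Longrightarrow> novar i (P ^ e)"
  by (induction e) (auto intro: novar_mult novar_one)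
lemma novar_lin: "i \<noteq> j \<Longrightarrow> novar i (lin j c)"
  unfolding novar_def lin_def Xv_def cst_def
proof
  fix \<alpha> assume "i \<noteq> j" "\<alpha> \<in> Poly_Mapping.keys (Poly_Mapping.single (Poly_Mapping.single j 1) (1::real) - Poly_Mapping.single 0 c)"
  then show "Poly_Mapping.lookup \<alpha> i = 0"
    using keys_diff[of "Poly_Mapping.single (Poly_Mapping.single j 1) (1::real)" "Poly_Mapping.single 0 c"]
    by (auto simp: lookup_single split: if_splits)
qed
lemma novar_gp: "i \<noteq> j \<Longrightarrow> novar i (gp m j)"
  unfolding gp_def by (intro novar_prod novar_lin)

lemma mpderiv_power: "mpderiv i (f ^ e) = cst (real e) * f ^ (e - 1) * mpderiv i f"
proof (induction e)
  case 0 then show ?case by simp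
next
  case (Suc e)
  show ?case
  proof (cases e)
    case 0 then show ?thesis by (simp add: mpderiv_mult)
  next
    case (Suc e')
    have "mpderiv i (f ^ Suc e) = mpderiv i f * f ^ e + f * (cst (real e) * f ^ (e - 1) * mpderiv i f)"
      by (simp add: mpderiv_mult Suc.IH)
    also have "\<dots> = (cst 1 + cst (real e)) * f ^ e * mpderiv i f"
      using Suc by (simp add: algebra_simps)
    also have "\<dots> = cst (real (Suc e)) * f ^ (Suc e - 1) * mpderiv i f"
      by (simp flip: cst_add cst_1 add: add.commute)
    finally show ?thesis .
  qed
qed

definition gpd :: "nat \<Rightarrow> nat \<Rightarrow> mpoly" where "gpd m i = mpderiv i (gp m i)"

lemma Gq_split:
  assumes "i < n"
  shows "Gq m n q = gp m i ^ q i * (\<Prod>j\<in>{..<n} - {i}. gp m j ^ q j)"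
  unfolding Gq_def using assms by (simp add: prod.remove)

lemma mpderiv_Gq:
  assumes "i < n"
  shows "mpderiv i (Gq m n q) = cst (real (q i)) * gpd m i * Gq m n (q(i := q i - 1))"
proof -
  let ?R = "\<Prod>j\<in>{..<n} - {i}. gp m j ^ q j"
  have R: "(\<Prod>j\<in>{..<n} - {i}. gp m j ^ (q(i := q i - 1)) j) = ?R"
    by (rule prod.cong) auto
  have nR: "novar i ?R"
    by (intro novar_prod novar_power novar_gp) auto
  show ?thesis
    unfolding Gq_split[OF assms] Gq_split[OF assms, of m "q(i := q i - 1)"] R
    by (simp add: mpderiv_mult novar_mpderiv[OF nR] mpderiv_power gpd_def algebra_simps)
qed

lemma meval_gp: "meval (gp m i) a = (\<Prod>j\<in>{0..m}. a i - real j)"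
  by (simp add: gp_def meval_prod)

lemma meval_gp_grid: "a i \<in> real ` {0..m} \<Longrightarrow> meval (gp m i) a = 0"
  unfolding meval_gp by auto

lemma meval_gpd_grid:
  assumes "a i = real t" "t \<le> m"
  shows "meval (gpd m i) a \<noteq> 0"
proof -
  let ?rest = "\<Prod>j\<in>{0..m} - {t}. lin i (real j)"
  have g: "gp m i = lin i (real t) * ?rest"
    unfolding gp_def using assms by (simp add: prod.remove)
  have "meval (gpd m i) a = meval (mpderiv i (lin i (real t))) a * meval ?rest a + meval (lin i (real t)) a * meval (mpderiv i ?rest) a"
    by (simp add: gpd_def g mpderiv_mult meval_add meval_mult)
  also have "\<dots> = (\<Prod>j\<in>{0..m} - {t}. real t - real j)"
    using assms by (simp add: mpderiv_lin meval_prod)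
  also have "\<dots> \<noteq> 0" by (auto simp: prod_zero_iff)
  finally show ?thesis .
qed

lemma grid_gp: "a \<in> grid m n \<Longrightarrow> i < n \<Longrightarrow> meval (gp m i) a = 0"
  unfolding grid_def by (auto intro: meval_gp_grid)

lemma zm_Gq: "a \<in> grid m n \<Longrightarrow> zm n (qs n q) (Gq m n q) a"
proof -
  assume a: "a \<in> grid m n"
  have "zm n (q i * 1) (gp m i ^ q i) a" if "i < n" for i
    by (rule zm_power) (simp add: zm_Suc grid_gp[OF a that])
  then show ?thesis
    unfolding Gq_def qs_def
    using zm_prod[of "{..<n}" n "\<lambda>i. q i * 1" "\<lambda>i. gp m i ^ q i" a] by simp
qed

lemma meval_Gq_grid:
  assumes "a \<in> grid m n"
  shows "meval (Gq m n q) a = (if \<forall>i<n. q i = 0 then 1 else 0)"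
  using assms by (auto simp: Gq_def meval_prod meval_power grid_gp)

lemma qs_upd: "i < n \<Longrightarrow> qs n (q(i := x)) + q i = qs n q + x"
proof -
  assume i: "i < n"
  have "qs n (q(i := x)) = x + (\<Sum>j\<in>{..<n} - {i}. q j)"
    unfolding qs_def using i by (simp add: sum.remove)
  moreover have "qs n q = q i + (\<Sum>j\<in>{..<n} - {i}. q j)"
    unfolding qs_def using i by (simp add: sum.remove)
  ultimately show ?thesis by simp
qed

lemma qs_zero_iff: "qs n q = 0 \<longleftrightarrow> (\<forall>i<n. q i = 0)"
  unfolding qs_def by auto

lemma lemD:
  assumes a: "a \<in> grid m n"
  shows "finite J \<Longrightarrow> (\<forall>j\<in>J. s \<le> qs n (q j) \<and> (\<forall>i\<ge>n. q j i = 0)) \<Longrightarrow>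
     zm n (Suc s) (\<Sum>j\<in>J. Gq m n (q j) * \<psi> j) a \<Longrightarrow> qs n Q = s \<Longrightarrow> (\<forall>i\<ge>n. Q i = 0) \<Longrightarrow>
     (\<Sum>j\<in>{j\<in>J. q j = Q}. meval (\<psi> j) a) = 0"
proof (induction s arbitrary: q \<psi> Q)
  case 0
  have Q0: "Q = (\<lambda>_. 0)"
  proof
    fix i show "Q i = 0" using 0(4,5) qs_zero_iff[of n Q] by (cases "i < n") auto
  qed
  have qeq: "(\<forall>i<n. q j i = 0) \<longleftrightarrow> q j = Q" if "j \<in> J" for j
  proof
    assume h: "\<forall>i<n. q j i = 0"
    show "q j = Q"
    proof
      fix i show "q j i = Q i" using h 0(2) that Q0 by (cases "i < n") auto
    qed
  qed (use Q0 in auto)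
  have "0 = meval (\<Sum>j\<in>J. Gq m n (q j) * \<psi> j) a"
    using 0(3) unfolding zm_Suc by simp
  also have "\<dots> = (\<Sum>j\<in>J. if q j = Q then meval (\<psi> j) a else 0)"
    unfolding meval_sum meval_mult using qeq by (intro sum.cong) (auto simp: meval_Gq_grid[OF a])
  also have "\<dots> = (\<Sum>j\<in>{j\<in>J. q j = Q}. meval (\<psi> j) a)"
    using 0(1) by (simp add: sum.inter_filter)
  finally show ?case by simp
next
  case (Suc s)
  obtain i where i: "i < n" "Q i > 0"
    using Suc.prems(4) by (metis gr0I qs_zero_iff zero_neq_one Zero_not_Suc)
  define q' where "q' j = (q j)(i := q j i - 1)" for j
  define \<psi>' where "\<psi>' j = cst (real (q j i)) * gpd m i * \<psi> j" for j
  define Q' where "Q' = Q(i := Q i - 1)"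
  let ?F = "\<Sum>j\<in>J. Gq m n (q j) * \<psi> j"
  let ?E = "\<Sum>j\<in>J. Gq m n (q j) * mpderiv i (\<psi> j)"
  have dF: "mpderiv i ?F = (\<Sum>j\<in>J. Gq m n (q' j) * \<psi>' j) + ?E"
  proof -
    have "mpderiv i ?F = (\<Sum>j\<in>J. mpderiv i (Gq m n (q j)) * \<psi> j + Gq m n (q j) * mpderiv i (\<psi> j))"
      by (simp add: mpderiv_sum mpderiv_mult)
    also have "\<dots> = (\<Sum>j\<in>J. Gq m n (q' j) * \<psi>' j + Gq m n (q j) * mpderiv i (\<psi> j))"
      by (intro sum.cong refl) (simp add: mpderiv_Gq[OF i(1)] q'_def \<psi>'_def mult.assoc mult.left_commute)
    finally show ?thesis by (simp add: sum.distrib)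
  qed
  have "\<forall>i<n. zm n (Suc s) (mpderiv i ?F) a"
    using Suc.prems(3) unfolding zm_Suc[of n "Suc s" ?F] by (rule conjunct2)
  then have "zm n (Suc s) (mpderiv i ?F) a" using i by blast
  moreover have "zm n (Suc s) ?E a"
  proof (rule zm_sum)
    fix j assume "j \<in> J"
    then have "zm n (Suc s) (Gq m n (q j)) a"
      using zm_Gq[OF a, of "q j"] Suc.prems(2) zm_mono by blast
    then show "zm n (Suc s) (Gq m n (q j) * mpderiv i (\<psi> j)) a" by (rule zm_mult_right)
  qed
  ultimately have z: "zm n (Suc s) (\<Sum>j\<in>J. Gq m n (q' j) * \<psi>' j) a"
    using zm_diff dF by fastforce
  have h2: "\<forall>j\<in>J. s \<le> qs n (q' j) \<and> (\<forall>i\<ge>n. q' j i = 0)"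
  proof
    fix j assume j: "j \<in> J"
    have "qs n (q' j) + q j i = qs n (q j) + (q j i - 1)"
      unfolding q'_def using qs_upd[OF i(1)] by blast
    then show "s \<le> qs n (q' j) \<and> (\<forall>i\<ge>n. q' j i = 0)"
      using Suc.prems(2) j i(1) by (auto simp: q'_def)
  qed
  have QQ: "qs n Q' + Q i = qs n Q + (Q i - 1)"
    unfolding Q'_def using qs_upd[OF i(1)] by blast
  have IH: "(\<Sum>j\<in>{j\<in>J. q' j = Q'}. meval (\<psi>' j) a) = 0"
    apply (rule Suc.IH[OF Suc.prems(1) h2 z])
    using QQ Suc.prems(4) i apply simp
    using Suc.prems(5) i by (auto simp: Q'_def)
  have seteq: "{j\<in>J. q' j = Q'} = {j\<in>J. q j = Q}"
  proof (intro Set.set_eqI iffI)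
    fix j assume "j \<in> {j\<in>J. q j = Q}" then show "j \<in> {j\<in>J. q' j = Q'}"
      by (auto simp: q'_def Q'_def)
  next
    fix j assume j: "j \<in> {j\<in>J. q' j = Q'}"
    then have qq: "q' j = Q'" by simp
    have eq1: "q j l = Q l" if "l \<noteq> i" for l
      using fun_cong[OF qq, of l] that by (auto simp: q'_def Q'_def)
    have eq2: "q j i - 1 = Q i - 1"
      using fun_cong[OF qq, of i] by (auto simp: q'_def Q'_def)
    note eq = eq1 eq2
    have "q j = Q(i := q j i)" using eq(1) by (auto simp: fun_eq_iff)
    then have "qs n (q j) + Q i = qs n Q + q j i" using qs_upd[OF i(1), of Q "q j i"] by simp
    moreover have "Suc s \<le> qs n (q j)" using Suc.prems(2) j by auto
    ultimately have "q j i = Q i" using eq(2) i Suc.prems(4) by linarith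
    then have "q j = Q"
    proof -
      assume h: "q j i = Q i"
      show "q j = Q"
      proof
        fix x show "q j x = Q x" by (cases "x = i") (use eq(1) h in auto)
      qed
    qed
    then show "j \<in> {j\<in>J. q j = Q}" using j by simp
  qed
  have "0 = (\<Sum>j\<in>{j\<in>J. q j = Q}. meval (\<psi>' j) a)" using IH seteq by simp
  also have "\<dots> = (\<Sum>j\<in>{j\<in>J. q j = Q}. real (Q i) * meval (gpd m i) a * meval (\<psi> j) a)"
    by (intro sum.cong) (auto simp: \<psi>'_def meval_mult)
  also have "\<dots> = real (Q i) * meval (gpd m i) a * (\<Sum>j\<in>{j\<in>J. q j = Q}. meval (\<psi> j) a)"
    by (simp add: sum_distrib_left)
  moreover obtain t where "a i = real t" "t \<le> m" using a i(1) unfolding grid_def by auto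
  then have "meval (gpd m i) a \<noteq> 0" by (rule meval_gpd_grid)
  ultimately show ?case using i(2) by simp
qed



definition Box :: "nat \<Rightarrow> nat \<Rightarrow> (nat \<Rightarrow>\<^sub>0 nat) set" where
  "Box m n = {r. Poly_Mapping.keys r \<subseteq> {..<n} \<and> (\<forall>i. Poly_Mapping.lookup r i \<le> m)}"

definition M1 :: "nat \<Rightarrow> nat \<Rightarrow> (nat \<Rightarrow>\<^sub>0 nat)" where
  "M1 m n = (\<Sum>i<n. Poly_Mapping.single i m)"

lemma M1_Suc: "M1 m (Suc n) = M1 m n + Poly_Mapping.single n m"
  by (simp add: M1_def)

lemma Box_0: "Box m 0 = {0}"
  by (auto simp: Box_def)

lemma Box_Suc: "Box m (Suc n) = (\<lambda>(r,t). r + Poly_Mapping.single n t) ` (Box m n \<times> {..m})"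
proof (intro Set.set_eqI iffI)
  fix r assume r: "r \<in> Box m (Suc n)"
  define r' where "r' = r - Poly_Mapping.single n (Poly_Mapping.lookup r n)"
  have "r = r' + Poly_Mapping.single n (Poly_Mapping.lookup r n)"
    by (rule poly_mapping_eqI) (auto simp: r'_def lookup_add lookup_minus lookup_single when_def)
  moreover have "r' \<in> Box m n"
  proof -
    have "x < n" if "x \<in> Poly_Mapping.keys r'" for x
    proof -
      have "Poly_Mapping.lookup r' x \<noteq> 0" using that by (simp add: in_keys_iff)
      then have "x \<noteq> n" "Poly_Mapping.lookup r x \<noteq> 0"
        by (auto simp: r'_def lookup_minus lookup_single when_def split: if_splits)
      then have "x \<in> Poly_Mapping.keys r" by (simp add: in_keys_iff)
      then show "x < n" using r \<open>x \<noteq> n\<close> by (auto simp: Box_def less_Suc_eq)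
    qed
    moreover have "Poly_Mapping.lookup r' i \<le> m" for i
      using r by (auto simp: Box_def r'_def lookup_minus intro: le_trans[OF diff_le_self])
    ultimately show ?thesis by (auto simp: Box_def)
  qed
  moreover have "Poly_Mapping.lookup r n \<le> m" using r by (simp add: Box_def)
  ultimately show "r \<in> (\<lambda>(r,t). r + Poly_Mapping.single n t) ` (Box m n \<times> {..m})"
    by force
next
  fix r assume "r \<in> (\<lambda>(r,t). r + Poly_Mapping.single n t) ` (Box m n \<times> {..m})"
  then obtain r' t where r: "r = r' + Poly_Mapping.single n t" "r' \<in> Box m n" "t \<le> m" by auto
  have "Poly_Mapping.keys r \<subseteq> {..<Suc n}"
    using r keys_add[of r' "Poly_Mapping.single n t"] unfolding Box_def
    by (auto split: if_splits)
  moreover have "Poly_Mapping.lookup r i \<le> m" for i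
  proof (cases "i = n")
    case True
    then have "Poly_Mapping.lookup r' i = 0" using r(2) by (auto simp: Box_def in_keys_iff)
    then show ?thesis using r True by (simp add: lookup_add)
  next
    case False then show ?thesis using r by (simp add: lookup_add lookup_single Box_def)
  qed
  ultimately show "r \<in> Box m (Suc n)" by (simp add: Box_def)
qed

lemma Box_inj: "inj_on (\<lambda>(r,t). r + Poly_Mapping.single n t) (Box m n \<times> {..m})"
proof (rule inj_onI, clarify)
  fix r t r' t' assume h: "r \<in> Box m n" "r' \<in> Box m n" "r + Poly_Mapping.single n t = r' + Poly_Mapping.single n t'"
  have z: "Poly_Mapping.lookup r n = 0" "Poly_Mapping.lookup r' n = 0"
    using h(1,2) by (auto simp: Box_def in_keys_iff)
  have "t = t'" using arg_cong[OF h(3), of "\<lambda>p. Poly_Mapping.lookup p n"] z by (simp add: lookup_add)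
  moreover then have "r = r'" using h(3) by simp
  ultimately show "r = r' \<and> t = t'" by simp
qed

lemma finite_Box: "finite (Box m n)"
  by (induction n) (auto simp: Box_0 Box_Suc)

lemma mono_ev_single: "mono_ev (Poly_Mapping.single n t) a = a n ^ t"
  by (cases "t = 0") (auto simp: mono_ev_def)

lemma mono_ev_upd: "Poly_Mapping.keys r \<subseteq> {..<n} \<Longrightarrow> mono_ev r (a(n := x)) = mono_ev r a"
  unfolding mono_ev_def by (intro prod.cong) auto

lemma sum_Box_Suc: "(\<Sum>r\<in>Box m (Suc n). f r) = (\<Sum>t\<le>m. \<Sum>r\<in>Box m n. f (r + Poly_Mapping.single n t))"
proof -
  have "(\<Sum>r\<in>Box m (Suc n). f r) = (\<Sum>x\<in>Box m n \<times> {..m}. f ((\<lambda>(r,t). r + Poly_Mapping.single n t) x))"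
    unfolding Box_Suc by (simp add: sum.reindex[OF Box_inj])
  also have "\<dots> = (\<Sum>r\<in>Box m n. \<Sum>t\<le>m. f (r + Poly_Mapping.single n t))"
    by (simp add: sum.cartesian_product split_def)
  also have "\<dots> = (\<Sum>t\<le>m. \<Sum>r\<in>Box m n. f (r + Poly_Mapping.single n t))"
    by (rule sum.swap)
  finally show ?thesis .
qed

lemma root_lemma:
  fixes b :: "nat \<Rightarrow> real"
  assumes "finite X" "card X > d" "\<And>x. x \<in> X \<Longrightarrow> (\<Sum>t\<le>d. b t * x ^ t) = 0"
  shows "\<forall>t\<le>d. b t = 0"
proof -
  define p where "p = (\<Sum>t\<le>d. monom (b t) t)"
  have ev: "poly p x = (\<Sum>t\<le>d. b t * x ^ t)" for x
    by (simp add: p_def poly_sum poly_monom)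
  have deg: "degree p \<le> d"
    unfolding p_def by (intro degree_sum_le) (auto simp: degree_monom_le order.trans[OF degree_monom_le])
  have "p = 0"
  proof (rule ccontr)
    assume "p \<noteq> 0"
    then have "card {x. poly p x = 0} \<le> degree p" by (rule card_poly_roots_bound)
    moreover have "card X \<le> card {x. poly p x = 0}"
      using \<open>p \<noteq> 0\<close> assms(3) by (intro card_mono poly_roots_finite) (auto simp: ev)
    ultimately show False using deg assms(2) by linarith
  qed
  then have "coeff p t = 0" for t by simp
  moreover have "coeff p t = (if t \<le> d then b t else 0)" for t
    by (simp add: p_def coeff_sum coeff_monom)
  ultimately show ?thesis by (metis)
qed

lemma grid_upd: "a \<in> grid m n \<Longrightarrow> x \<in> real ` {0..m} \<Longrightarrow> a(n := x) \<in> grid m (Suc n)"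
  unfolding grid_def by (auto simp: less_Suc_eq)

lemma grid_0: "grid m 0 = {\<lambda>_. 0}"
  unfolding grid_def by auto

lemma split_eval:
  assumes "a \<in> grid m n"
  shows "(\<Sum>r\<in>Box m (Suc n). c r * mono_ev r (a(n := x))) =
     (\<Sum>t\<le>m. (\<Sum>r\<in>Box m n. c (r + Poly_Mapping.single n t) * mono_ev r a) * x ^ t)"
  unfolding sum_Box_Suc
  by (intro sum.cong refl)
     (auto simp: mono_ev_add mono_ev_single mono_ev_upd Box_def sum_distrib_right mult.assoc)

lemma lemA_coef:
  "\<forall>c. (\<forall>a\<in>grid m n. (\<Sum>r\<in>Box m n. c r * mono_ev r a) = 0) \<longrightarrow> (\<forall>r\<in>Box m n. c r = 0)"
proof (induction n)
  case 0 then show ?case by (simp add: Box_0 grid_0)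
next
  case (Suc n)
  show ?case
  proof (intro allI impI ballI)
    fix c r
    assume h: "\<forall>a\<in>grid m (Suc n). (\<Sum>r\<in>Box m (Suc n). c r * mono_ev r a) = 0"
    assume r: "r \<in> Box m (Suc n)"
    have St: "\<forall>t\<le>m. (\<Sum>r\<in>Box m n. c (r + Poly_Mapping.single n t) * mono_ev r a) = 0" if a: "a \<in> grid m n" for a
    proof (rule root_lemma[of "real ` {0..m}"])
      fix x assume x: "x \<in> real ` {0..m}"
      have "(\<Sum>r\<in>Box m (Suc n). c r * mono_ev r (a(n := x))) = 0"
        using h grid_upd[OF a x] by blast
      then show "(\<Sum>t\<le>m. (\<Sum>r\<in>Box m n. c (r + Poly_Mapping.single n t) * mono_ev r a) * x ^ t) = 0"
        unfolding split_eval[OF a] .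
    qed (auto simp: card_image inj_on_def)
    have "\<forall>r\<in>Box m n. c (r + Poly_Mapping.single n t) = 0" if "t \<le> m" for t
      using Suc.IH[rule_format, of "\<lambda>r. c (r + Poly_Mapping.single n t)"] St that by blast
    then show "c r = 0" using r unfolding Box_Suc by auto
  qed
qed

lemma lemB_coef:
  "\<forall>c. (\<forall>a\<in>grid m n - {\<lambda>_. 0}. (\<Sum>r\<in>Box m n. c r * mono_ev r a) = 0) \<longrightarrow> c (M1 m n) = 0 \<longrightarrow> (\<forall>r\<in>Box m n. c r = 0)"
proof (induction n)
  case 0 then show ?case by (simp add: Box_0 grid_0 M1_def)
next
  case (Suc n)
  show ?case
  proof (intro allI impI ballI)
    fix c r
    assume h: "\<forall>a\<in>grid m (Suc n) - {\<lambda>_. 0}. (\<Sum>r\<in>Box m (Suc n). c r * mono_ev r a) = 0"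
    assume hM: "c (M1 m (Suc n)) = 0"
    assume r: "r \<in> Box m (Suc n)"
    define S where "S t a = (\<Sum>r\<in>Box m n. c (r + Poly_Mapping.single n t) * mono_ev r a)" for t a
    have St: "\<forall>t\<le>m. S t a = 0" if a: "a \<in> grid m n" "a \<noteq> (\<lambda>_. 0)" for a
    proof (rule root_lemma[of "real ` {0..m}"])
      fix x assume x: "x \<in> real ` {0..m}"
      have "a(n := x) \<noteq> (\<lambda>_. 0)"
      proof
        assume eq: "a(n := x) = (\<lambda>_. 0)"
        have an: "a n = 0" using a(1) by (simp add: grid_def)
        have "a = (\<lambda>_. 0)"
        proof
          fix i show "a i = 0" using an fun_cong[OF eq, of i] by (cases "i = n") auto
        qed
        then show False using a(2) by simp
      qed
      then have "(\<Sum>r\<in>Box m (Suc n). c r * mono_ev r (a(n := x))) = 0"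
        using h grid_upd[OF a(1) x] by blast
      then show "(\<Sum>t\<le>m. S t a * x ^ t) = 0"
        unfolding split_eval[OF a(1)] S_def .
    qed (auto simp: card_image inj_on_def)
    have Sm: "\<forall>r\<in>Box m n. c (r + Poly_Mapping.single n m) = 0"
    proof -
      have A1: "\<forall>a\<in>grid m n - {\<lambda>_. 0}. S m a = 0"
      proof
        fix a assume "a \<in> grid m n - {\<lambda>_. 0}"
        then show "S m a = 0" using St[of a] by blast
      qed
      have A2: "c (M1 m n + Poly_Mapping.single n m) = 0" using hM by (simp add: M1_Suc)
      show ?thesis
        using Suc.IH[rule_format, of "\<lambda>r. c (r + Poly_Mapping.single n m)"] A1[unfolded S_def] A2 by blast
    qed
    have Sm0: "S m a = 0" for a
      unfolding S_def using Sm by simp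
    have S0: "S t (\<lambda>_. 0) = 0" if "t < m" for t
    proof -
      have "\<forall>t\<le>m - 1. S t (\<lambda>_. 0) = 0"
      proof (rule root_lemma[of "real ` {1..m}"])
        fix x assume x: "x \<in> real ` {1..m}"
        then have x': "x \<in> real ` {0..m}" by auto
        have ne: "(\<lambda>_. 0::real)(n := x) \<noteq> (\<lambda>_. 0)" using x by (auto simp: fun_eq_iff)
        have g0: "(\<lambda>_. 0::real) \<in> grid m n" by (auto simp: grid_def)
        have "(\<Sum>r\<in>Box m (Suc n). c r * mono_ev r ((\<lambda>_. 0)(n := x))) = 0"
          using h grid_upd[OF g0 x'] ne by blast
        then have "(\<Sum>t\<le>m. S t (\<lambda>_. 0) * x ^ t) = 0"
          unfolding split_eval[OF g0] S_def .
        moreover have "{..m} = insert m {..m - 1}" using that by auto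
        moreover have "m \<notin> {..m - 1}" using that by auto
        ultimately show "(\<Sum>t\<le>m - 1. S t (\<lambda>_. 0) * x ^ t) = 0"
          using Sm0 by (simp add: sum.insert)
      qed (use that in \<open>auto simp: card_image inj_on_def\<close>)
      then show ?thesis using that by simp
    qed
    have "\<forall>r\<in>Box m n. c (r + Poly_Mapping.single n t) = 0" if "t \<le> m" for t
    proof (cases "t = m")
      case True then show ?thesis using Sm by simp
    next
      case False
      then have "t < m" using that by simp
      have "\<forall>a\<in>grid m n. S t a = 0"
      proof
        fix a assume a: "a \<in> grid m n"
        show "S t a = 0"
        proof (cases "a = (\<lambda>_. 0)")
          case True then show ?thesis using S0[OF \<open>t < m\<close>] by simp
        next
          case False then show ?thesis using St[OF a False] that by blast
        qed
      qed
      then show ?thesis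
        using lemA_coef[rule_format, of m n "\<lambda>r. c (r + Poly_Mapping.single n t)"] by (simp add: S_def)
    qed
    then show "c r = 0" using r unfolding Box_Suc by auto
  qed
qed

lemma meval_Box:
  "Poly_Mapping.keys f \<subseteq> Box m n \<Longrightarrow> meval f a = (\<Sum>r\<in>Box m n. Poly_Mapping.lookup f r * mono_ev r a)"
  unfolding meval_alt
  by (rule sum.mono_neutral_left) (auto simp: finite_Box in_keys_iff)

lemma zero_from_Box: "Poly_Mapping.keys f \<subseteq> Box m n \<Longrightarrow> (\<forall>r\<in>Box m n. Poly_Mapping.lookup f r = 0) \<Longrightarrow> f = (0::mpoly)"
  by (rule poly_mapping_eqI) (metis in_keys_iff lookup_zero subsetD)

lemma alonA:
  assumes "Poly_Mapping.keys f \<subseteq> Box m n" "\<forall>a\<in>grid m n. meval f a = 0"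
  shows "f = 0"
  using assms lemA_coef[rule_format, of m n "Poly_Mapping.lookup f"]
  by (intro zero_from_Box) (auto simp: meval_Box)

lemma alonB:
  assumes "Poly_Mapping.keys f \<subseteq> Box m n" "Poly_Mapping.lookup f (M1 m n) = 0"
    "\<forall>a\<in>grid m n - {\<lambda>_. 0}. meval f a = 0"
  shows "f = 0"
  using assms lemB_coef[rule_format, of m n "Poly_Mapping.lookup f"]
  by (intro zero_from_Box) (auto simp: meval_Box)



lemma mon_deg_superset: "finite S \<Longrightarrow> Poly_Mapping.keys a \<subseteq> S \<Longrightarrow> mon_deg a = (\<Sum>v\<in>S. Poly_Mapping.lookup a v)"
  unfolding mon_deg_def by (rule sum.mono_neutral_left) (auto simp: in_keys_iff)

lemma mon_deg_add: "mon_deg (a + b) = mon_deg a + mon_deg b"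
proof -
  let ?S = "Poly_Mapping.keys a \<union> Poly_Mapping.keys b"
  show ?thesis
    by (simp add: mon_deg_superset[OF _ keys_add] mon_deg_superset[of ?S a] mon_deg_superset[of ?S b]
        lookup_add sum.distrib)
qed

lemma mon_deg_single[simp]: "mon_deg (Poly_Mapping.single i t) = t"
  by (cases "t = 0") (auto simp: mon_deg_def)

lemma mon_deg_zero[simp]: "mon_deg 0 = 0"
  by (simp add: mon_deg_def)

lemma mon_deg_le: "(\<And>v. Poly_Mapping.lookup a v \<le> Poly_Mapping.lookup b v) \<Longrightarrow> mon_deg a \<le> mon_deg b"
proof -
  assume h: "\<And>v. Poly_Mapping.lookup a v \<le> Poly_Mapping.lookup b v"
  let ?S = "Poly_Mapping.keys a \<union> Poly_Mapping.keys b"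
  show ?thesis
    by (simp add: mon_deg_superset[of ?S a] mon_deg_superset[of ?S b] sum_mono h)
qed

lemma mon_deg_lessThan: "Poly_Mapping.keys a \<subseteq> {..<n} \<Longrightarrow> mon_deg a = (\<Sum>v<n. Poly_Mapping.lookup a v)"
  by (rule mon_deg_superset) auto

definition ub :: "(nat \<Rightarrow> nat) \<Rightarrow> mpoly \<Rightarrow> bool" where
  "ub f P \<longleftrightarrow> (\<forall>\<gamma>\<in>Poly_Mapping.keys P. \<forall>v. Poly_Mapping.lookup \<gamma> v \<le> f v)"

lemma ub_mult: "ub f A \<Longrightarrow> ub g B \<Longrightarrow> ub (\<lambda>v. f v + g v) (A * B)"
  unfolding ub_def using keys_mult[of A B] by (force simp: lookup_add intro: add_mono)

lemma ub_one: "ub (\<lambda>_. 0) 1"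
  by (simp add: ub_def)

lemma ub_mono: "ub f A \<Longrightarrow> (\<And>v. f v \<le> g v) \<Longrightarrow> ub g A"
  unfolding ub_def using le_trans by blast

lemma ub_power: "ub f A \<Longrightarrow> ub (\<lambda>v. e * f v) (A ^ e)"
proof (induction e)
  case 0 then show ?case using ub_one by simp
next
  case (Suc e)
  then have "ub (\<lambda>v. f v + e * f v) (A * A ^ e)" by (intro ub_mult)
  then show ?case by simp
qed

lemma ub_prod: "finite S \<Longrightarrow> (\<And>x. x \<in> S \<Longrightarrow> ub (f x) (P x)) \<Longrightarrow> ub (\<lambda>v. \<Sum>x\<in>S. f x v) (\<Prod>x\<in>S. P x)"
proof (induction S rule: finite_induct)
  case empty then show ?case using ub_one by simp
next
  case (insert x S)
  then have "ub (\<lambda>v. f x v + (\<Sum>x\<in>S. f x v)) (P x * (\<Prod>x\<in>S. P x))"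
    by (intro ub_mult) auto
  then show ?case using insert by simp
qed

lemma ub_add: "ub f A \<Longrightarrow> ub f B \<Longrightarrow> ub f (A + B)"
  unfolding ub_def using keys_add[of A B] by blast

lemma ub_single: "(\<And>v. Poly_Mapping.lookup r v \<le> f v) \<Longrightarrow> ub f (Poly_Mapping.single r c)"
  unfolding ub_def by auto

definition LT :: "(nat \<Rightarrow>\<^sub>0 nat) \<Rightarrow> mpoly \<Rightarrow> bool" where
  "LT a P \<longleftrightarrow> (\<forall>\<gamma>\<in>Poly_Mapping.keys (P - Poly_Mapping.single a 1).
      (\<forall>v. Poly_Mapping.lookup \<gamma> v \<le> Poly_Mapping.lookup a v) \<and> mon_deg \<gamma> < mon_deg a)"

lemma LT_ub: "LT a P \<Longrightarrow> ub (Poly_Mapping.lookup a) P"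
proof -
  assume h: "LT a P"
  have "P = (P - Poly_Mapping.single a 1) + Poly_Mapping.single a 1" by simp
  then have "Poly_Mapping.keys P \<subseteq> Poly_Mapping.keys (P - Poly_Mapping.single a 1) \<union> {a}"
    using keys_add[of "P - Poly_Mapping.single a 1" "Poly_Mapping.single a 1"] by auto
  then show ?thesis using h unfolding LT_def ub_def by blast
qed

lemma LT_mult:
  assumes A: "LT a A" and B: "LT b B"
  shows "LT (a + b) (A * B)"
proof -
  let ?xa = "Poly_Mapping.single a (1::real)" and ?xb = "Poly_Mapping.single b (1::real)"
  have eq: "A * B - Poly_Mapping.single (a + b) 1 = (A - ?xa) * B + ?xa * (B - ?xb)"
    by (simp add: mult_single algebra_simps)
  have uB: "ub (Poly_Mapping.lookup b) B" using LT_ub[OF B] .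
  show ?thesis
    unfolding LT_def
  proof
    fix \<gamma> assume "\<gamma> \<in> Poly_Mapping.keys (A * B - Poly_Mapping.single (a + b) 1)"
    then have "\<gamma> \<in> Poly_Mapping.keys ((A - ?xa) * B) \<union> Poly_Mapping.keys (?xa * (B - ?xb))"
      unfolding eq using keys_add[of "(A - ?xa) * B" "?xa * (B - ?xb)"] by blast
    then show "(\<forall>v. Poly_Mapping.lookup \<gamma> v \<le> Poly_Mapping.lookup (a + b) v) \<and> mon_deg \<gamma> < mon_deg (a + b)"
    proof
      assume "\<gamma> \<in> Poly_Mapping.keys ((A - ?xa) * B)"
      then obtain g d where gd: "\<gamma> = g + d" "g \<in> Poly_Mapping.keys (A - ?xa)" "d \<in> Poly_Mapping.keys B"
        using keys_mult[of "A - ?xa" B] by blast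
      have g: "\<forall>v. Poly_Mapping.lookup g v \<le> Poly_Mapping.lookup a v" "mon_deg g < mon_deg a"
        using A gd(2) unfolding LT_def by auto
      have d: "\<forall>v. Poly_Mapping.lookup d v \<le> Poly_Mapping.lookup b v"
        using uB gd(3) unfolding ub_def by auto
      have "mon_deg d \<le> mon_deg b" using d by (intro mon_deg_le) auto
      then show ?thesis using g d gd(1) by (auto simp: lookup_add mon_deg_add intro: add_mono)
    next
      assume "\<gamma> \<in> Poly_Mapping.keys (?xa * (B - ?xb))"
      then obtain g d where gd: "\<gamma> = g + d" "g \<in> Poly_Mapping.keys ?xa" "d \<in> Poly_Mapping.keys (B - ?xb)"
        using keys_mult[of ?xa "B - ?xb"] by blast
      have d: "\<forall>v. Poly_Mapping.lookup d v \<le> Poly_Mapping.lookup b v" "mon_deg d < mon_deg b"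
        using B gd(3) unfolding LT_def by auto
      have "g = a" using gd(2) by simp
      then show ?thesis using d gd(1) by (auto simp: lookup_add mon_deg_add)
    qed
  qed
qed

lemma LT_one: "LT 0 1"
  by (simp add: LT_def)

lemma LT_prod: "finite S \<Longrightarrow> (\<And>x. x \<in> S \<Longrightarrow> LT (a x) (P x)) \<Longrightarrow> LT (\<Sum>x\<in>S. a x) (\<Prod>x\<in>S. P x)"
  by (induction S rule: finite_induct) (auto intro: LT_mult LT_one)

lemma LT_lin: "LT (Poly_Mapping.single i 1) (lin i c)"
proof -
  have "lin i c - Poly_Mapping.single (Poly_Mapping.single i 1) 1 = Poly_Mapping.single 0 (- c)"
    by (simp add: lin_def Xv_def cst_def single_uminus)
  then show ?thesis unfolding LT_def by (auto split: if_splits)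
qed

lemma LT_gp: "LT (Poly_Mapping.single i (Suc m)) (gp m i)"
proof -
  have "LT (\<Sum>j\<in>{0..m}. Poly_Mapping.single i 1) (gp m i)"
    unfolding gp_def by (intro LT_prod LT_lin) auto
  moreover have "(\<Sum>j\<in>{0..m}. Poly_Mapping.single i (1::nat)) = Poly_Mapping.single i (Suc m)"
    by (rule poly_mapping_eqI) (unfold lookup_sum, simp add: lookup_single when_def)
  ultimately show ?thesis by simp
qed



definition vl :: "nat \<Rightarrow> nat \<Rightarrow> ((nat \<Rightarrow> nat) \<times> (nat \<Rightarrow>\<^sub>0 nat) \<times> real) list \<Rightarrow> mpoly" where
  "vl m n xs = sum_list (map (\<lambda>(q,r,c). Gq m n q * Poly_Mapping.single r c) xs)"

lemma vl_append: "vl m n (xs @ ys) = vl m n xs + vl m n ys"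
  by (simp add: vl_def)

lemma vl_concat: "vl m n (concat xss) = sum_list (map (vl m n) xss)"
  by (induction xss) (auto simp: vl_def)

lemma Gq_zero: "Gq m n (\<lambda>_. 0) = 1"
  by (simp add: Gq_def)

definition shq :: "nat \<Rightarrow> (nat \<Rightarrow> nat) \<Rightarrow> (nat \<Rightarrow> nat)" where "shq i q = q(i := q i + 1)"

lemma Gq_shift: "i < n \<Longrightarrow> Gq m n (q(i := q i + 1)) = gp m i * Gq m n q"
proof -
  assume i: "i < n"
  have R: "(\<Prod>j\<in>{..<n} - {i}. gp m j ^ (q(i := q i + 1)) j) = (\<Prod>j\<in>{..<n} - {i}. gp m j ^ q j)"
    by (rule prod.cong) auto
  show ?thesis
    unfolding Gq_split[OF i, of m "q(i := q i + 1)"] Gq_split[OF i, of m q] R by simp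
qed

lemma vl_shift: "i < n \<Longrightarrow> vl m n (map (\<lambda>(q,r,c). (shq i q, r, c)) xs) = gp m i * vl m n xs"
proof -
  assume i: "i < n"
  have "vl m n (map (\<lambda>(q,r,c). (shq i q, r, c)) xs) = gp m i * vl m n xs"
  proof (induction xs)
    case (Cons e xs)
    obtain q r c where "e = (q,r,c)" by (cases e) auto
    moreover have "Gq m n (shq i q) = gp m i * Gq m n q" using Gq_shift[OF i, of m q] by (simp add: shq_def)
    ultimately show ?case using Cons by (simp add: vl_def algebra_simps)
  qed (simp add: vl_def)
  then show ?thesis .
qed

lemma vl_scale: "vl m n (map (\<lambda>(q,r,c). (q, r, d * c)) xs) = cst d * vl m n xs"
  by (induction xs) (auto simp: vl_def cst_def mult_single algebra_simps)

lemma keys_gp_rest: "Poly_Mapping.keys (Poly_Mapping.single (Poly_Mapping.single i (Suc m)) 1 - gp m i) \<subseteq> (\<lambda>t. Poly_Mapping.single i t) ` {..m}"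
proof
  fix \<gamma> assume "\<gamma> \<in> Poly_Mapping.keys (Poly_Mapping.single (Poly_Mapping.single i (Suc m)) 1 - gp m i)"
  then have "\<gamma> \<in> Poly_Mapping.keys (gp m i - Poly_Mapping.single (Poly_Mapping.single i (Suc m)) 1)"
    by (metis keys_minus minus_diff_eq)
  then have h: "\<forall>v. Poly_Mapping.lookup \<gamma> v \<le> Poly_Mapping.lookup (Poly_Mapping.single i (Suc m)) v"
    "mon_deg \<gamma> < Suc m"
    using LT_gp[of i m] unfolding LT_def by auto
  have g: "\<gamma> = Poly_Mapping.single i (Poly_Mapping.lookup \<gamma> i)"
  proof (rule poly_mapping_eqI)
    fix v show "Poly_Mapping.lookup \<gamma> v = Poly_Mapping.lookup (Poly_Mapping.single i (Poly_Mapping.lookup \<gamma> i)) v"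
      using h(1)[rule_format, of v] by (cases "v = i") (auto simp: lookup_single)
  qed
  then have "mon_deg \<gamma> = Poly_Mapping.lookup \<gamma> i" by (metis mon_deg_single)
  then show "\<gamma> \<in> (\<lambda>t. Poly_Mapping.single i t) ` {..m}" using g h(2) by auto
qed

lemma expand_superset: "finite S \<Longrightarrow> Poly_Mapping.keys P \<subseteq> S \<Longrightarrow> (P::mpoly) = (\<Sum>\<alpha>\<in>S. Poly_Mapping.single \<alpha> (Poly_Mapping.lookup P \<alpha>))"
  apply (subst mpoly_expand)
  by (rule sum.mono_neutral_left) (auto simp: in_keys_iff)

lemma gp_rest_expand:
  "Poly_Mapping.single (Poly_Mapping.single i (Suc m)) 1 - gp m i =
    (\<Sum>t\<le>m. Poly_Mapping.single (Poly_Mapping.single i t)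
        (Poly_Mapping.lookup (Poly_Mapping.single (Poly_Mapping.single i (Suc m)) 1 - gp m i) (Poly_Mapping.single i t)))"
  (is "?D = _")
proof -
  have "?D = (\<Sum>\<alpha>\<in>(\<lambda>t. Poly_Mapping.single i t) ` {..m}. Poly_Mapping.single \<alpha> (Poly_Mapping.lookup ?D \<alpha>))"
    by (rule expand_superset[OF _ keys_gp_rest]) simp
  also have "\<dots> = (\<Sum>t\<le>m. Poly_Mapping.single (Poly_Mapping.single i t) (Poly_Mapping.lookup ?D (Poly_Mapping.single i t)))"
    by (subst sum.reindex[OF inj_on_subset[OF inj_single subset_UNIV]]) simp
  finally show ?thesis .
qed

definition okE :: "nat \<Rightarrow> nat \<Rightarrow> (nat \<Rightarrow>\<^sub>0 nat) \<Rightarrow> (nat \<Rightarrow> nat) \<times> (nat \<Rightarrow>\<^sub>0 nat) \<times> real \<Rightarrow> bool" where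
  "okE m n \<beta> e \<longleftrightarrow> (case e of (q,r,c) \<Rightarrow> r \<in> Box m n \<and> (\<forall>i\<ge>n. q i = 0) \<and>
      (\<forall>i. Suc m * q i + Poly_Mapping.lookup r i \<le> Poly_Mapping.lookup \<beta> i))"

lemma Rep:
  "Poly_Mapping.keys \<beta> \<subseteq> {..<n} \<Longrightarrow> \<exists>xs. Poly_Mapping.single \<beta> 1 = vl m n xs \<and> (\<forall>e\<in>set xs. okE m n \<beta> e)"
proof (induction "mon_deg \<beta>" arbitrary: \<beta> rule: less_induct)
  case less
  show ?case
  proof (cases "\<forall>i. Poly_Mapping.lookup \<beta> i \<le> m")
    case True
    have "Poly_Mapping.single \<beta> 1 = vl m n [((\<lambda>_. 0), \<beta>, 1)]"
      by (simp add: vl_def Gq_zero)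
    moreover have "okE m n \<beta> ((\<lambda>_. 0), \<beta>, 1)"
      using True less.prems by (simp add: okE_def Box_def)
    ultimately show ?thesis by (intro exI[of _ "[((\<lambda>_. 0), \<beta>, 1)]"]) auto
  next
    case False
    then obtain i where bi: "Poly_Mapping.lookup \<beta> i > m" by (auto simp: not_le)
    then have "i \<in> Poly_Mapping.keys \<beta>" by (simp add: in_keys_iff)
    then have i: "i < n" using less.prems by auto
    define \<gamma> where "\<gamma> = \<beta> - Poly_Mapping.single i (Suc m)"
    have bdec: "\<beta> = \<gamma> + Poly_Mapping.single i (Suc m)"
      by (rule poly_mapping_eqI) (use bi in \<open>auto simp: \<gamma>_def lookup_add lookup_minus lookup_single when_def\<close>)
    have kg: "Poly_Mapping.keys \<gamma> \<subseteq> {..<n}"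
    proof
      fix x assume "x \<in> Poly_Mapping.keys \<gamma>"
      then have "Poly_Mapping.lookup \<beta> x \<noteq> 0" by (auto simp: \<gamma>_def in_keys_iff lookup_minus)
      then show "x \<in> {..<n}" using less.prems by (metis in_keys_iff subsetD)
    qed
    have dg: "mon_deg \<gamma> < mon_deg \<beta>" using bdec by (simp add: mon_deg_add)
    obtain xs0 where xs0: "Poly_Mapping.single \<gamma> 1 = vl m n xs0" "\<forall>e\<in>set xs0. okE m n \<gamma> e"
      using less.hyps[OF dg kg] by blast
    have kt: "Poly_Mapping.keys (\<gamma> + Poly_Mapping.single i t) \<subseteq> {..<n}" for t
      using kg i keys_add[of \<gamma> "Poly_Mapping.single i t"] by (auto split: if_splits)
    have dt: "mon_deg (\<gamma> + Poly_Mapping.single i t) < mon_deg \<beta>" if "t \<le> m" for t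
      using bdec that by (simp add: mon_deg_add)
    have "\<forall>t. \<exists>xs. t \<le> m \<longrightarrow> Poly_Mapping.single (\<gamma> + Poly_Mapping.single i t) 1 = vl m n xs \<and>
        (\<forall>e\<in>set xs. okE m n (\<gamma> + Poly_Mapping.single i t) e)"
      using less.hyps[OF dt kt] by blast
    then obtain X where X: "\<And>t. t \<le> m \<Longrightarrow> Poly_Mapping.single (\<gamma> + Poly_Mapping.single i t) 1 = vl m n (X t) \<and>
        (\<forall>e\<in>set (X t). okE m n (\<gamma> + Poly_Mapping.single i t) e)"
      by metis
    define D where "D = Poly_Mapping.single (Poly_Mapping.single i (Suc m)) 1 - gp m i"
    define d where "d t = Poly_Mapping.lookup D (Poly_Mapping.single i t)" for t
    define F :: "(nat \<Rightarrow> nat) \<times> (nat \<Rightarrow>\<^sub>0 nat) \<times> real \<Rightarrow> _" where "F = (\<lambda>(q,r,c). (shq i q, r, c))"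
    define G :: "nat \<Rightarrow> (nat \<Rightarrow> nat) \<times> (nat \<Rightarrow>\<^sub>0 nat) \<times> real \<Rightarrow> _" where "G t = (\<lambda>(q,r,c). (q, r, d t * c))" for t
    define ys where "ys = map F xs0 @ concat (map (\<lambda>t. map (G t) (X t)) [0..<Suc m])"
    have "Poly_Mapping.single \<beta> (1::real) = Poly_Mapping.single \<gamma> 1 * Poly_Mapping.single (Poly_Mapping.single i (Suc m)) 1"
      by (simp add: bdec mult_single)
    also have "\<dots> = Poly_Mapping.single \<gamma> 1 * gp m i + Poly_Mapping.single \<gamma> 1 * D"
      by (simp add: D_def algebra_simps)
    also have "Poly_Mapping.single \<gamma> 1 * D = (\<Sum>t\<le>m. cst (d t) * Poly_Mapping.single (\<gamma> + Poly_Mapping.single i t) 1)"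
      unfolding D_def d_def
      by (subst gp_rest_expand) (simp add: sum_distrib_left mult_single cst_def)
    also have "\<dots> = (\<Sum>t\<le>m. vl m n (map (\<lambda>(q,r,c). (q, r, d t * c)) (X t)))"
      by (intro sum.cong refl) (simp add: vl_scale X)
    also have "\<dots> = sum_list (map (\<lambda>t. vl m n (map (\<lambda>(q,r,c). (q, r, d t * c)) (X t))) [0..<Suc m])"
      by (simp only: interv_sum_list_conv_sum_set_nat set_upt atLeast0LessThan lessThan_Suc_atMost)
    also have "Poly_Mapping.single \<gamma> 1 * gp m i = vl m n (map (\<lambda>(q,r,c). (shq i q, r, c)) xs0)"
      using vl_shift[OF i, of m xs0] xs0(1) by (simp add: mult.commute)
    finally have e1: "Poly_Mapping.single \<beta> 1 = vl m n ys"
      by (simp add: ys_def vl_append vl_concat comp_def F_def G_def)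
    have e2: "\<forall>e\<in>set ys. okE m n \<beta> e"
    proof
      fix e assume "e \<in> set ys"
      then have "(\<exists>e0\<in>set xs0. e = F e0) \<or> (\<exists>t\<le>m. \<exists>e0\<in>set (X t). e = G t e0)"
      proof -
        assume "e \<in> set ys"
        then have "e \<in> F ` set xs0 \<or> (\<exists>t\<in>set [0..<Suc m]. e \<in> G t ` set (X t))"
          unfolding ys_def by (simp del: upt_Suc)
        moreover have "set [0..<Suc m] = {..m}" by auto
        ultimately show ?thesis by auto
      qed
      then consider (a) e0 where "e0 \<in> set xs0" "e = F e0"
        | (b) t e0 where "t \<le> m" "e0 \<in> set (X t)" "e = G t e0"
        by blast
      then show "okE m n \<beta> e"
      proof cases
        case a
        obtain q r c where e0: "e0 = (q, r, c)" by (cases e0) auto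
        have ok: "okE m n \<gamma> (q, r, c)" using a xs0(2) e0 by auto
        have h: "r \<in> Box m n" "\<forall>j\<ge>n. q j = 0" "\<forall>j. Suc m * q j + Poly_Mapping.lookup r j \<le> Poly_Mapping.lookup \<gamma> j"
          using ok unfolding okE_def by auto
        have "Suc m * (q(i := q i + 1)) j + Poly_Mapping.lookup r j \<le> Poly_Mapping.lookup \<beta> j" for j
          using h(3)[rule_format, of j] by (cases "j = i") (auto simp: bdec lookup_add lookup_single)
        moreover have "\<forall>j\<ge>n. (q(i := q i + 1)) j = 0" using h(2) i by auto
        ultimately show ?thesis
          using h(1) unfolding a(2) e0 okE_def shq_def F_def by simp
      next
        case b
        obtain q r c where e0: "e0 = (q, r, c)" by (cases e0) auto
        have ok: "okE m n (\<gamma> + Poly_Mapping.single i t) (q, r, c)" using b X e0 by auto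
        have h: "r \<in> Box m n" "\<forall>j\<ge>n. q j = 0" "\<forall>j. Suc m * q j + Poly_Mapping.lookup r j \<le> Poly_Mapping.lookup (\<gamma> + Poly_Mapping.single i t) j"
          using ok unfolding okE_def by auto
        have "Suc m * q j + Poly_Mapping.lookup r j \<le> Poly_Mapping.lookup \<beta> j" for j
          using h(3)[rule_format, of j] b(1) by (cases "j = i") (auto simp: bdec lookup_add lookup_single)
        then show ?thesis
          using h(1,2) unfolding b(3) e0 okE_def G_def by simp
      qed
    qed
    show ?thesis using e1 e2 by blast
  qed
qed



definition cnd :: "nat \<Rightarrow> nat \<Rightarrow> nat \<Rightarrow> mpoly \<Rightarrow> bool" where
  "cnd m n k Q \<longleftrightarrow> (\<forall>a\<in>grid m n - {(\<lambda>_. 0)}. zm n k Q a) \<and> zm n (k - 1) Q (\<lambda>_. 0)"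

lemma cnd_add: "cnd m n k A \<Longrightarrow> cnd m n k B \<Longrightarrow> cnd m n k (A + B)"
  unfolding cnd_def by (auto intro: zm_add)
lemma cnd_diff: "cnd m n k A \<Longrightarrow> cnd m n k B \<Longrightarrow> cnd m n k (A - B)"
  unfolding cnd_def by (auto intro: zm_diff)
lemma cnd_zero: "cnd m n k 0"
  unfolding cnd_def by auto
lemma cnd_mult_left: "cnd m n k A \<Longrightarrow> cnd m n k (B * A)"
  unfolding cnd_def by (auto intro: zm_mult_left)
lemma cnd_sum: "(\<And>x. x \<in> S \<Longrightarrow> cnd m n k (f x)) \<Longrightarrow> cnd m n k (\<Sum>x\<in>S. f x)"
  by (induction S rule: infinite_finite_induct) (auto intro: cnd_add cnd_zero)
lemma cnd_sum_list: "(\<And>x. x \<in> set xs \<Longrightarrow> cnd m n k (f x)) \<Longrightarrow> cnd m n k (sum_list (map f xs))"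
  by (induction xs) (auto intro: cnd_add cnd_zero)

definition good :: "nat \<Rightarrow> nat \<Rightarrow> nat \<Rightarrow> (nat \<Rightarrow>\<^sub>0 nat) \<Rightarrow> bool" where
  "good m n k \<gamma> \<longleftrightarrow> Poly_Mapping.keys \<gamma> \<subseteq> {..<n} \<and> mon_deg \<gamma> \<le> m * n + (m + 1) * (k - 1) - 1 \<and>
     \<not> (\<exists>is. length is = k \<and> set is \<subseteq> {..<n} \<and>
        (\<forall>v. Poly_Mapping.lookup (\<Sum>j\<leftarrow>is. Poly_Mapping.single j (m + 1)) v \<le> Poly_Mapping.lookup \<gamma> v))"

lemma mvars_sub_iff: "mvars P \<subseteq> V \<longleftrightarrow> (\<forall>\<gamma>\<in>Poly_Mapping.keys P. Poly_Mapping.keys \<gamma> \<subseteq> V)"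
  by (auto simp: mvars_def)

lemma mdeg_le_iff: "mdeg P \<le> X \<longleftrightarrow> (\<forall>\<gamma>\<in>Poly_Mapping.keys P. mon_deg \<gamma> \<le> X)"
  by (simp add: mdeg_def)

lemma reduced_iff: "reduced n m k P \<longleftrightarrow> (\<forall>\<gamma>\<in>Poly_Mapping.keys P. good m n k \<gamma>)"
  unfolding reduced_def good_def mvars_sub_iff mdeg_le_iff by blast

lemma lookup_sum_singles: "Poly_Mapping.lookup (\<Sum>j\<leftarrow>is. Poly_Mapping.single j c) v = c * count_list is v"
  by (induction "is") (auto simp: lookup_add lookup_single)

lemma count_list_replicate': "count_list (replicate c v) w = (if v = w then c else 0)"
  by (induction c) auto

lemma count_take_le: "count_list (take k xs) v \<le> count_list xs v"
  by (metis append_take_drop_id count_list_append le_add1)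

lemma count_rep_list: "count_list (concat (map (\<lambda>v. replicate (q v) v) [0..<n])) w = (if w < n then q w else 0)"
  by (induction n) (auto simp: count_list_replicate')

lemma length_rep_list: "length (concat (map (\<lambda>v. replicate (q v) v) [0..<n])) = qs n q"
  unfolding qs_def by (induction n) auto

lemma set_rep_list: "set (concat (map (\<lambda>v. replicate (q v) v) [0..<n])) \<subseteq> {..<n}"
  by auto

lemma nondiv:
  assumes k: "k \<ge> 1" and qk: "qs n q \<le> k - 1"
    and g: "\<And>v. Poly_Mapping.lookup \<gamma> v \<le> Suc m * q v + m"
  shows "\<not> (\<exists>is. length is = k \<and> set is \<subseteq> {..<n} \<and>
        (\<forall>v. Poly_Mapping.lookup (\<Sum>j\<leftarrow>is. Poly_Mapping.single j (m + 1)) v \<le> Poly_Mapping.lookup \<gamma> v))"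
proof
  assume "\<exists>is. length is = k \<and> set is \<subseteq> {..<n} \<and>
        (\<forall>v. Poly_Mapping.lookup (\<Sum>j\<leftarrow>is. Poly_Mapping.single j (m + 1)) v \<le> Poly_Mapping.lookup \<gamma> v)"
  then obtain ls where ls: "length ls = k" "set ls \<subseteq> {..<n}"
    "\<And>v. Suc m * count_list ls v \<le> Poly_Mapping.lookup \<gamma> v"
    by (auto simp: lookup_sum_singles)
  have c: "count_list ls v \<le> q v" for v
  proof -
    have "Suc m * count_list ls v \<le> Suc m * q v + m" using ls(3)[of v] g[of v] by linarith
    then have "Suc m * count_list ls v < Suc m * (q v + 1)" by simp
    then have "0 < Suc m \<and> count_list ls v < q v + 1" by (simp only: mult_less_cancel1)
    then show ?thesis by simp
  qed
  have "k = (\<Sum>v<n. count_list ls v)" using sum_count_set[OF ls(2)] ls(1) by simp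
  also have "\<dots> \<le> qs n q" unfolding qs_def by (intro sum_mono c)
  finally show False using qk k by linarith
qed

lemma good_qs:
  assumes "good m n k \<beta>" "\<forall>i\<ge>n. q i = 0" "\<forall>i. Suc m * q i \<le> Poly_Mapping.lookup \<beta> i"
  shows "qs n q \<le> k - 1"
proof (rule ccontr)
  assume "\<not> qs n q \<le> k - 1"
  then have qk: "qs n q \<ge> k" by simp
  define L where "L = concat (map (\<lambda>v. replicate (q v) v) [0..<n])"
  define ls where "ls = take k L"
  have l1: "length ls = k" unfolding ls_def L_def using qk length_rep_list[of q n] by simp
  have l2: "set ls \<subseteq> {..<n}" unfolding ls_def L_def using set_rep_list[of q n] set_take_subset[of k "concat (map (\<lambda>v. replicate (q v) v) [0..<n])"] by (rule order.trans[rotated])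
  have l3: "\<forall>v. Poly_Mapping.lookup (\<Sum>j\<leftarrow>ls. Poly_Mapping.single j (m + 1)) v \<le> Poly_Mapping.lookup \<beta> v"
  proof
    fix v
    have "count_list ls v \<le> q v"
    proof (cases "v < n")
      case True then show ?thesis
        using count_take_le[of k L v] count_rep_list[of q n v] unfolding ls_def L_def by simp
    next
      case False then show ?thesis
        using count_take_le[of k L v] count_rep_list[of q n v] unfolding ls_def L_def by simp
    qed
    then have "Suc m * count_list ls v \<le> Suc m * q v" by (rule mult_le_mono2)
    then show "Poly_Mapping.lookup (\<Sum>j\<leftarrow>ls. Poly_Mapping.single j (m + 1)) v \<le> Poly_Mapping.lookup \<beta> v"
      using assms(3)[rule_format, of v] by (simp add: lookup_sum_singles)
  qed
  have "\<exists>is. length is = k \<and> set is \<subseteq> {..<n} \<and>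
        (\<forall>v. Poly_Mapping.lookup (\<Sum>j\<leftarrow>is. Poly_Mapping.single j (m + 1)) v \<le> Poly_Mapping.lookup \<beta> v)"
    apply (rule exI[of _ ls]) using l1 l2 l3 by simp
  then show False using assms(1) unfolding good_def by simp
qed

lemma lookup_M1: "Poly_Mapping.lookup (M1 m n) v = (if v < n then m else 0)"
  unfolding M1_def by (simp add: lookup_sum lookup_single when_def)

lemma keys_M1: "Poly_Mapping.keys (M1 m n) \<subseteq> {..<n}"
  by (auto simp: in_keys_iff lookup_M1 split: if_splits)

lemma mon_deg_M1: "mon_deg (M1 m n) = m * n"
  by (subst mon_deg_lessThan[OF keys_M1]) (simp add: lookup_M1)

lemma mon_deg_Box: "r \<in> Box m n \<Longrightarrow> mon_deg r \<le> m * n"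
proof -
  assume r: "r \<in> Box m n"
  then have "mon_deg r = (\<Sum>v<n. Poly_Mapping.lookup r v)" by (intro mon_deg_lessThan) (auto simp: Box_def)
  also have "\<dots> \<le> (\<Sum>v<n. m)" using r by (intro sum_mono) (auto simp: Box_def)
  finally show ?thesis by (simp add: mult.commute)
qed

lemma Box_lt:
  assumes r: "r \<in> Box m n" "r \<noteq> M1 m n"
  shows "mon_deg r < m * n"
proof (rule ccontr)
  assume "\<not> mon_deg r < m * n"
  then have eq: "(\<Sum>v<n. Poly_Mapping.lookup r v) = (\<Sum>v<n. m)"
    using mon_deg_Box[OF r(1)] mon_deg_lessThan[of r n] r(1) by (auto simp: Box_def mult.commute)
  have "\<forall>v\<in>{..<n}. Poly_Mapping.lookup r v = m"
    using sum_mono_inv[OF eq] r(1) by (auto simp: Box_def)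
  then have "r = M1 m n"
    using r(1) by (intro poly_mapping_eqI) (auto simp: lookup_M1 Box_def in_keys_iff)
  then show False using r(2) by simp
qed

lemma good_top:
  assumes "good m n k \<beta>" "k \<ge> 2" "qs n q = k - 1" "\<forall>i. Suc m * q i + Poly_Mapping.lookup r i \<le> Poly_Mapping.lookup \<beta> i"
    "\<forall>i\<ge>n. q i = 0"
  shows "r \<noteq> M1 m n"
proof
  assume r: "r = M1 m n"
  have kb: "Poly_Mapping.keys \<beta> \<subseteq> {..<n}" using assms(1) by (simp add: good_def)
  have "(\<Sum>v<n. Suc m * q v + Poly_Mapping.lookup r v) \<le> (\<Sum>v<n. Poly_Mapping.lookup \<beta> v)"
    using assms(4) by (intro sum_mono) auto
  also have "\<dots> = mon_deg \<beta>" using mon_deg_lessThan[OF kb] by simp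
  moreover have "(\<Sum>v<n. Suc m * q v + Poly_Mapping.lookup r v) = Suc m * (k - 1) + m * n"
    using assms(3) r by (simp add: sum.distrib lookup_M1 qs_def flip: sum_distrib_left)
  ultimately have "Suc m * (k - 1) + m * n \<le> mon_deg \<beta>" by simp
  moreover have "mon_deg \<beta> \<le> m * n + (m + 1) * (k - 1) - 1" using assms(1) unfolding good_def by simp
  moreover have "(m + 1) * (k - 1) \<ge> 1" using assms(2) by simp
  ultimately show False by simp
qed



definition Lp :: "nat \<Rightarrow> nat \<Rightarrow> mpoly" where "Lp m n = (\<Prod>i<n. hp m i)"

lemma LT_hp: "LT (Poly_Mapping.single i m) (hp m i)"
proof -
  have "LT (\<Sum>j\<in>{1..m}. Poly_Mapping.single i 1) (hp m i)"
    unfolding hp_def by (intro LT_prod LT_lin) auto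
  moreover have "(\<Sum>j\<in>{1..m}. Poly_Mapping.single i (1::nat)) = Poly_Mapping.single i m"
    by (rule poly_mapping_eqI) (unfold lookup_sum, simp add: lookup_single when_def)
  ultimately show ?thesis by simp
qed

lemma LT_Lp: "LT (M1 m n) (Lp m n)"
  unfolding Lp_def M1_def by (intro LT_prod LT_hp) auto

lemma meval_Lp_grid:
  assumes a: "a \<in> grid m n - {\<lambda>_. 0}"
  shows "meval (Lp m n) a = 0"
proof -
  have ag: "a \<in> grid m n" "a \<noteq> (\<lambda>_. 0)" using a by auto
  have "\<exists>i. a i \<noteq> 0" using ag(2) by (auto simp: fun_eq_iff)
  then obtain i where i: "a i \<noteq> 0" by blast
  have "i < n"
  proof (rule ccontr)
    assume "\<not> i < n" then have "a i = 0" using ag(1) by (simp add: grid_def)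
    then show False using i by simp
  qed
  then obtain t where t: "a i = real t" "t \<le> m" using ag(1) unfolding grid_def by auto
  then have "t \<in> {1..m}" using i by auto
  then have "meval (hp m i) a = 0" unfolding hp_def meval_prod using t by (auto simp: prod_zero_iff)
  then show ?thesis unfolding Lp_def meval_prod using \<open>i < n\<close> by (auto simp: prod_zero_iff)
qed

lemma ub_Gq: "(\<forall>v\<ge>n. q v = 0) \<Longrightarrow> ub (\<lambda>v. Suc m * q v) (Gq m n q)"
proof -
  assume q: "\<forall>v\<ge>n. q v = 0"
  have "ub (\<lambda>v. \<Sum>i<n. q i * Poly_Mapping.lookup (Poly_Mapping.single i (Suc m)) v) (Gq m n q)"
    unfolding Gq_def by (intro ub_prod ub_power LT_ub LT_gp) auto
  moreover have "(\<Sum>i<n. q i * Poly_Mapping.lookup (Poly_Mapping.single i (Suc m)) v) = Suc m * q v" for v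
  proof -
    have "(\<Sum>i<n. q i * Poly_Mapping.lookup (Poly_Mapping.single i (Suc m)) v) = (\<Sum>i\<in>{..<n}. if i = v then q i * Suc m else 0)"
      by (rule sum.cong) (auto simp: lookup_single when_def)
    also have "\<dots> = Suc m * q v" using q by (cases "v < n") (auto simp: sum.delta)
    finally show ?thesis .
  qed
  ultimately show ?thesis by simp
qed

lemma keys_cst_mult: "Poly_Mapping.keys (cst c * P) \<subseteq> Poly_Mapping.keys P"
  using keys_mult[of "cst c" P] by (auto simp: cst_def split: if_splits)

lemma keys_sum_list: "Poly_Mapping.keys (sum_list (map f xs) :: mpoly) \<subseteq> (\<Union>x\<in>set xs. Poly_Mapping.keys (f x))"
proof (induction xs)
  case (Cons a xs)
  then show ?case using keys_add[of "f a" "sum_list (map f xs)"] by auto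
qed simp

definition pc :: "nat \<Rightarrow> nat \<Rightarrow> nat \<Rightarrow> (nat \<Rightarrow> nat) \<times> (nat \<Rightarrow>\<^sub>0 nat) \<times> real \<Rightarrow> mpoly" where
  "pc m n k e = (case e of (q,r,c) \<Rightarrow>
     (if k \<le> qs n q then 0 else if qs n q = k - 1 \<and> r = M1 m n
      then Gq m n q * (cst c * (Poly_Mapping.single (M1 m n) 1 - Lp m n))
      else Gq m n q * Poly_Mapping.single r c))"

lemma piece_cnd:
  assumes k: "k \<ge> 1"
  shows "cnd m n k (Gq m n q * Poly_Mapping.single r c - pc m n k (q, r, c))"
proof -
  have G: "zm n (qs n q) (Gq m n q) a" if "a \<in> grid m n" for a using zm_Gq[OF that] .
  have g0: "(\<lambda>_. 0::real) \<in> grid m n" by (auto simp: grid_def)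
  consider (hi) "k \<le> qs n q" | (top) "\<not> k \<le> qs n q" "qs n q = k - 1" "r = M1 m n"
    | (lo) "\<not> k \<le> qs n q" "\<not> (qs n q = k - 1 \<and> r = M1 m n)" by blast
  then show ?thesis
  proof cases
    case hi
    have "zm n k (Gq m n q * Poly_Mapping.single r c) a" if "a \<in> grid m n" for a
      using G[OF that] hi by (intro zm_mult_right) (rule zm_mono)
    moreover have "zm n (k - 1) (Gq m n q * Poly_Mapping.single r c) (\<lambda>_. 0)"
      using calculation[OF g0] by (rule zm_mono) simp
    ultimately show ?thesis using hi unfolding cnd_def pc_def by auto
  next
    case top
    have eq: "Gq m n q * Poly_Mapping.single r c - pc m n k (q, r, c) = Gq m n q * (cst c * Lp m n)"
      using top unfolding pc_def
      by (simp add: algebra_simps cst_def mult_single)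
    have "zm n k (Gq m n q * (cst c * Lp m n)) a" if "a \<in> grid m n - {\<lambda>_. 0}" for a
    proof -
      have "zm n 1 (cst c * Lp m n) a" using meval_Lp_grid[OF that] by (simp add: zm_Suc meval_mult)
      then have "zm n (qs n q + 1) (Gq m n q * (cst c * Lp m n)) a" using G that by (intro zm_mult) auto
      then show ?thesis using top k by simp
    qed
    moreover have "zm n (k - 1) (Gq m n q * (cst c * Lp m n)) (\<lambda>_. 0)"
      using G[OF g0] top by (intro zm_mult_right) simp
    ultimately show ?thesis unfolding cnd_def eq by blast
  next
    case lo
    then have "pc m n k (q, r, c) = Gq m n q * Poly_Mapping.single r c" unfolding pc_def by auto
    then show ?thesis by (simp add: cnd_zero)
  qed
qed

lemma good_decomp:
  assumes k: "k \<ge> 2" and qk: "qs n q \<le> k - 1" and r: "r \<in> Box m n"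
    and qb: "\<forall>v. Suc m * q v + Poly_Mapping.lookup r v \<le> Poly_Mapping.lookup \<beta> v"
    and qn: "\<forall>v\<ge>n. q v = 0"
    and d: "\<forall>v. Poly_Mapping.lookup \<delta> v \<le> Suc m * q v"
    and p: "\<forall>v. Poly_Mapping.lookup \<rho> v \<le> Poly_Mapping.lookup r v"
    and top: "qs n q = k - 1 \<Longrightarrow> mon_deg \<rho> < m * n"
  shows "good m n k (\<delta> + \<rho>) \<and> mon_deg (\<delta> + \<rho>) \<le> mon_deg \<beta>"
proof -
  have rn: "Poly_Mapping.lookup r v = 0" if "v \<ge> n" for v
    using r that by (auto simp: Box_def in_keys_iff)
  have kd: "Poly_Mapping.keys \<delta> \<subseteq> {..<n}"
  proof
    fix v assume "v \<in> Poly_Mapping.keys \<delta>"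
    then have "Poly_Mapping.lookup \<delta> v \<noteq> 0" by (simp add: in_keys_iff)
    then show "v \<in> {..<n}" using d qn by (metis le_zero_eq lessThan_iff mult_0_right not_le)
  qed
  have kr: "Poly_Mapping.keys \<rho> \<subseteq> {..<n}"
  proof
    fix v assume "v \<in> Poly_Mapping.keys \<rho>"
    then have "Poly_Mapping.lookup \<rho> v \<noteq> 0" by (simp add: in_keys_iff)
    then show "v \<in> {..<n}" using p rn by (metis le_zero_eq lessThan_iff not_le)
  qed
  have kg: "Poly_Mapping.keys (\<delta> + \<rho>) \<subseteq> {..<n}" using kd kr keys_add[of \<delta> \<rho>] by blast
  have "mon_deg (\<delta> + \<rho>) \<le> mon_deg \<beta>"
    using d p qb by (intro mon_deg_le) (auto simp: lookup_add intro: le_trans[OF add_mono])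
  moreover have md: "mon_deg \<delta> \<le> Suc m * qs n q"
  proof -
    have "mon_deg \<delta> = (\<Sum>v<n. Poly_Mapping.lookup \<delta> v)" by (rule mon_deg_lessThan[OF kd])
    also have "\<dots> \<le> (\<Sum>v<n. Suc m * q v)" using d by (intro sum_mono) auto
    finally show ?thesis by (simp add: qs_def sum_distrib_left)
  qed
  have mr: "mon_deg \<rho> \<le> m * n"
    using mon_deg_le[of \<rho> r] p mon_deg_Box[OF r] by auto
  have "mon_deg (\<delta> + \<rho>) \<le> m * n + (m + 1) * (k - 1) - 1"
  proof (cases "qs n q = k - 1")
    case True
    then have "mon_deg \<rho> < m * n" by (rule top)
    then show ?thesis using md True by (simp add: mon_deg_add)
  next
    case False
    then have "qs n q \<le> k - 2" using qk by simp
    then have "Suc m * qs n q \<le> Suc m * (k - 2)" by (rule mult_le_mono2)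
    moreover have "Suc m * (k - 2) + Suc m = Suc m * (k - 1)" using k
      by (metis Suc_diff_Suc Suc_1 less_le_trans lessI mult_Suc_right add.commute)
    ultimately show ?thesis using md mr by (simp add: mon_deg_add)
  qed
  moreover have "\<not> (\<exists>is. length is = k \<and> set is \<subseteq> {..<n} \<and>
        (\<forall>v. Poly_Mapping.lookup (\<Sum>j\<leftarrow>is. Poly_Mapping.single j (m + 1)) v \<le> Poly_Mapping.lookup (\<delta> + \<rho>) v))"
  proof (rule nondiv)
    fix v show "Poly_Mapping.lookup (\<delta> + \<rho>) v \<le> Suc m * q v + m"
    proof -
      have "Poly_Mapping.lookup \<rho> v \<le> m" using p r le_trans unfolding Box_def by blast
      then show ?thesis using d by (simp add: lookup_add add_mono)
    qed
  qed (use k qk in auto)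
  ultimately show ?thesis using kg unfolding good_def by blast
qed



lemma mono_red:
  assumes kb: "Poly_Mapping.keys \<beta> \<subseteq> {..<n}" and k: "k \<ge> 2"
  shows "\<exists>T. (\<forall>\<gamma>\<in>Poly_Mapping.keys T. good m n k \<gamma> \<and> mon_deg \<gamma> \<le> mon_deg \<beta>) \<and>
     cnd m n k (Poly_Mapping.single \<beta> 1 - T)"
proof -
  obtain xs where xs: "Poly_Mapping.single \<beta> 1 = vl m n xs" "\<forall>e\<in>set xs. okE m n \<beta> e"
    using Rep[OF kb] by blast
  define T where "T = sum_list (map (pc m n k) xs)"
  define h where "h e = (case e of (q,r,c) \<Rightarrow> Gq m n q * Poly_Mapping.single r c)" for e
  have "Poly_Mapping.single \<beta> 1 - T = sum_list (map (\<lambda>e. h e - pc m n k e) xs)"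
    unfolding T_def xs(1) vl_def h_def by (simp add: sum_list_subtractf)
  moreover have "cnd m n k (h e - pc m n k e)" for e
    using piece_cnd[of k m n] k unfolding h_def by (cases e) auto
  ultimately have C: "cnd m n k (Poly_Mapping.single \<beta> 1 - T)"
    by (simp add: cnd_sum_list)
  have K: "good m n k \<gamma> \<and> mon_deg \<gamma> \<le> mon_deg \<beta>" if g: "\<gamma> \<in> Poly_Mapping.keys T" for \<gamma>
  proof -
    obtain e where e: "e \<in> set xs" "\<gamma> \<in> Poly_Mapping.keys (pc m n k e)"
      using g keys_sum_list[of "pc m n k" xs] unfolding T_def by blast
    obtain q r c where eq: "e = (q, r, c)" by (cases e) auto
    have ok: "r \<in> Box m n" "\<forall>i\<ge>n. q i = 0" "\<forall>i. Suc m * q i + Poly_Mapping.lookup r i \<le> Poly_Mapping.lookup \<beta> i"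
      using xs(2) e(1) eq unfolding okE_def by auto
    have nhi: "\<not> k \<le> qs n q" using e(2) eq unfolding pc_def by (auto split: if_splits)
    then have qk: "qs n q \<le> k - 1" by simp
    have uG: "ub (\<lambda>v. Suc m * q v) (Gq m n q)" by (rule ub_Gq[OF ok(2)])
    show ?thesis
    proof (cases "qs n q = k - 1 \<and> r = M1 m n")
      case True
      then have "\<gamma> \<in> Poly_Mapping.keys (Gq m n q * (cst c * (Poly_Mapping.single (M1 m n) 1 - Lp m n)))"
        using e(2) eq nhi unfolding pc_def by simp
      then obtain \<delta> \<rho> where dr: "\<gamma> = \<delta> + \<rho>" "\<delta> \<in> Poly_Mapping.keys (Gq m n q)"
        "\<rho> \<in> Poly_Mapping.keys (cst c * (Poly_Mapping.single (M1 m n) 1 - Lp m n))"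
        using keys_mult[of "Gq m n q" "cst c * (Poly_Mapping.single (M1 m n) 1 - Lp m n)"] by blast
      have "\<rho> \<in> Poly_Mapping.keys (Lp m n - Poly_Mapping.single (M1 m n) 1)"
        using dr(3) keys_cst_mult by (metis keys_minus minus_diff_eq subsetD)
      then have rho: "\<forall>v. Poly_Mapping.lookup \<rho> v \<le> Poly_Mapping.lookup (M1 m n) v" "mon_deg \<rho> < mon_deg (M1 m n)"
        using LT_Lp[of m n] unfolding LT_def by auto
      show ?thesis unfolding dr(1)
        apply (rule good_decomp[OF k qk ok(1) ok(3) ok(2)])
        using uG dr(2) apply (simp add: ub_def)
        using rho True apply simp
        using rho mon_deg_M1 by simp
    next
      case False
      then have "\<gamma> \<in> Poly_Mapping.keys (Gq m n q * Poly_Mapping.single r c)"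
        using e(2) eq nhi False unfolding pc_def by (auto split: if_splits)
      then obtain \<delta> \<rho> where dr: "\<gamma> = \<delta> + \<rho>" "\<delta> \<in> Poly_Mapping.keys (Gq m n q)"
        "\<rho> \<in> Poly_Mapping.keys (Poly_Mapping.single r c)"
        using keys_mult[of "Gq m n q" "Poly_Mapping.single r c"] by blast
      have rr: "\<rho> = r" using dr(3) by (simp split: if_splits)
      show ?thesis unfolding dr(1)
        apply (rule good_decomp[OF k qk ok(1) ok(3) ok(2)])
        using uG dr(2) apply (simp add: ub_def)
        using rr apply simp
        using rr False Box_lt[OF ok(1)] by simp
    qed
  qed
  show ?thesis using C K by blast
qed

lemma existence:
  assumes mv: "mvars P \<subseteq> {..<n}" and k: "k \<ge> 2"
  shows "\<exists>P0. (\<forall>\<gamma>\<in>Poly_Mapping.keys P0. good m n k \<gamma> \<and> mon_deg \<gamma> \<le> mdeg P) \<and> cnd m n k (P - P0)"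
proof -
  have "\<forall>\<beta>\<in>Poly_Mapping.keys P. \<exists>T. (\<forall>\<gamma>\<in>Poly_Mapping.keys T. good m n k \<gamma> \<and> mon_deg \<gamma> \<le> mon_deg \<beta>) \<and>
     cnd m n k (Poly_Mapping.single \<beta> 1 - T)"
  proof
    fix \<beta> assume "\<beta> \<in> Poly_Mapping.keys P"
    then have "Poly_Mapping.keys \<beta> \<subseteq> {..<n}" using mv unfolding mvars_sub_iff by blast
    then show "\<exists>T. (\<forall>\<gamma>\<in>Poly_Mapping.keys T. good m n k \<gamma> \<and> mon_deg \<gamma> \<le> mon_deg \<beta>) \<and>
     cnd m n k (Poly_Mapping.single \<beta> 1 - T)" by (rule mono_red[OF _ k])
  qed
  from bchoice[OF this] obtain T where T0: "\<forall>\<beta>\<in>Poly_Mapping.keys P. (\<forall>\<gamma>\<in>Poly_Mapping.keys (T \<beta>). good m n k \<gamma> \<and> mon_deg \<gamma> \<le> mon_deg \<beta>) \<and>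
     cnd m n k (Poly_Mapping.single \<beta> 1 - T \<beta>)" by blast
  define P0 where "P0 = (\<Sum>\<beta>\<in>Poly_Mapping.keys P. cst (Poly_Mapping.lookup P \<beta>) * T \<beta>)"
  have "P = (\<Sum>\<beta>\<in>Poly_Mapping.keys P. cst (Poly_Mapping.lookup P \<beta>) * Poly_Mapping.single \<beta> 1)"
    by (subst mpoly_expand) (simp add: cst_def mult_single)
  then have "P - P0 = (\<Sum>\<beta>\<in>Poly_Mapping.keys P. cst (Poly_Mapping.lookup P \<beta>) * (Poly_Mapping.single \<beta> 1 - T \<beta>))"
    unfolding P0_def by (simp add: sum_subtractf right_diff_distrib)
  also have "cnd m n k \<dots>" by (intro cnd_sum cnd_mult_left) (use T0 in blast)
  finally have C: "cnd m n k (P - P0)" .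
  have md: "mon_deg \<beta> \<le> mdeg P" if "\<beta> \<in> Poly_Mapping.keys P" for \<beta>
    using mdeg_le_iff[of P "mdeg P"] that by auto
  have "good m n k \<gamma> \<and> mon_deg \<gamma> \<le> mdeg P" if g: "\<gamma> \<in> Poly_Mapping.keys P0" for \<gamma>
  proof -
    obtain \<beta> where b: "\<beta> \<in> Poly_Mapping.keys P" "\<gamma> \<in> Poly_Mapping.keys (cst (Poly_Mapping.lookup P \<beta>) * T \<beta>)"
      using g keys_sum[of "\<lambda>\<beta>. cst (Poly_Mapping.lookup P \<beta>) * T \<beta>" "Poly_Mapping.keys P"] unfolding P0_def by blast
    then have "\<gamma> \<in> Poly_Mapping.keys (T \<beta>)" using keys_cst_mult[of "Poly_Mapping.lookup P \<beta>" "T \<beta>"] by blast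
    then have "good m n k \<gamma> \<and> mon_deg \<gamma> \<le> mon_deg \<beta>" using conjunct1[OF T0[rule_format, OF b(1)]] by blast
    then show ?thesis using md[OF b(1)] by auto
  qed
  then show ?thesis using C by blast
qed



lemma sum_list_map_nth: "sum_list (map f xs) = (\<Sum>p<length xs. f (xs ! p))"
  by (simp add: sum_list_sum_nth atLeast0LessThan)

lemma uniq:
  assumes k: "k \<ge> 2" and red: "\<forall>\<gamma>\<in>Poly_Mapping.keys R. good m n k \<gamma>" and C: "cnd m n k R"
  shows "R = 0"
proof -
  have "\<forall>\<beta>\<in>Poly_Mapping.keys R. \<exists>xs. Poly_Mapping.single \<beta> 1 = vl m n xs \<and> (\<forall>e\<in>set xs. okE m n \<beta> e)"
  proof
    fix \<beta> assume "\<beta> \<in> Poly_Mapping.keys R"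
    then have "Poly_Mapping.keys \<beta> \<subseteq> {..<n}" using red unfolding good_def by blast
    then show "\<exists>xs. Poly_Mapping.single \<beta> 1 = vl m n xs \<and> (\<forall>e\<in>set xs. okE m n \<beta> e)" by (rule Rep)
  qed
  from bchoice[OF this] obtain X where X: "\<forall>\<beta>\<in>Poly_Mapping.keys R. Poly_Mapping.single \<beta> 1 = vl m n (X \<beta>) \<and> (\<forall>e\<in>set (X \<beta>). okE m n \<beta> e)"
    by blast
  define J where "J = Sigma (Poly_Mapping.keys R) (\<lambda>\<beta>. {..<length (X \<beta>)})"
  define qq where "qq j = fst (X (fst j) ! snd j)" for j
  define rr where "rr j = fst (snd (X (fst j) ! snd j))" for j
  define cc where "cc j = snd (snd (X (fst j) ! snd j))" for j
  define \<psi> where "\<psi> j = Poly_Mapping.single (rr j) (Poly_Mapping.lookup R (fst j) * cc j)" for j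
  have finJ: "finite J" unfolding J_def by auto
  have Rrep: "R = (\<Sum>j\<in>J. Gq m n (qq j) * \<psi> j)"
  proof -
    have "R = (\<Sum>\<beta>\<in>Poly_Mapping.keys R. cst (Poly_Mapping.lookup R \<beta>) * Poly_Mapping.single \<beta> 1)"
      by (subst mpoly_expand) (simp add: cst_def mult_single)
    also have "\<dots> = (\<Sum>\<beta>\<in>Poly_Mapping.keys R. cst (Poly_Mapping.lookup R \<beta>) * vl m n (X \<beta>))"
      using X by (intro sum.cong) auto
    also have "\<dots> = (\<Sum>\<beta>\<in>Poly_Mapping.keys R. \<Sum>p<length (X \<beta>). Gq m n (qq (\<beta>, p)) * \<psi> (\<beta>, p))"
    proof (intro sum.cong refl)
      fix \<beta>
      have "cst (Poly_Mapping.lookup R \<beta>) * vl m n (X \<beta>) =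
          (\<Sum>p<length (X \<beta>). cst (Poly_Mapping.lookup R \<beta>) * (case X \<beta> ! p of (q, r, c) \<Rightarrow> Gq m n q * Poly_Mapping.single r c))"
        unfolding vl_def sum_list_map_nth by (simp add: sum_distrib_left)
      also have "\<dots> = (\<Sum>p<length (X \<beta>). Gq m n (qq (\<beta>, p)) * \<psi> (\<beta>, p))"
      proof (intro sum.cong refl)
        fix p
        obtain q r c where e: "X \<beta> ! p = (q, r, c)" by (cases "X \<beta> ! p") auto
        show "cst (Poly_Mapping.lookup R \<beta>) * (case X \<beta> ! p of (q, r, c) \<Rightarrow> Gq m n q * Poly_Mapping.single r c) =
            Gq m n (qq (\<beta>, p)) * \<psi> (\<beta>, p)"
          unfolding e qq_def rr_def cc_def \<psi>_def by (simp add: e cst_def mult_single algebra_simps)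
      qed
      finally show "cst (Poly_Mapping.lookup R \<beta>) * vl m n (X \<beta>) = (\<Sum>p<length (X \<beta>). Gq m n (qq (\<beta>, p)) * \<psi> (\<beta>, p))" .
    qed
    also have "\<dots> = (\<Sum>j\<in>J. Gq m n (qq j) * \<psi> j)"
      unfolding J_def by (subst sum.Sigma) auto
    finally show ?thesis .
  qed
  have ent: "okE m n (fst j) (qq j, rr j, cc j)" if "j \<in> J" for j
  proof -
    have "X (fst j) ! snd j \<in> set (X (fst j))" using that unfolding J_def by auto
    moreover have "X (fst j) ! snd j = (qq j, rr j, cc j)" by (simp add: qq_def rr_def cc_def)
    ultimately show ?thesis using X that unfolding J_def by auto
  qed
  have entB: "rr j \<in> Box m n" "\<forall>i\<ge>n. qq j i = 0" "qs n (qq j) \<le> k - 1" "qs n (qq j) = k - 1 \<Longrightarrow> rr j \<noteq> M1 m n"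
    if j: "j \<in> J" for j
  proof -
    have gb: "good m n k (fst j)" using red j unfolding J_def by auto
    have o: "rr j \<in> Box m n" "\<forall>i\<ge>n. qq j i = 0" "\<forall>i. Suc m * qq j i + Poly_Mapping.lookup (rr j) i \<le> Poly_Mapping.lookup (fst j) i"
      using ent[OF j] unfolding okE_def by auto
    show "rr j \<in> Box m n" "\<forall>i\<ge>n. qq j i = 0" using o by auto
    show "qs n (qq j) \<le> k - 1" using good_qs[OF gb o(2)] o(3) by (meson le_add1 le_trans)
    show "qs n (qq j) = k - 1 \<Longrightarrow> rr j \<noteq> M1 m n" using good_top[OF gb k _ o(3) o(2)] by blast
  qed
  define \<phi> where "\<phi> Q = (\<Sum>j\<in>{j\<in>J. qq j = Q}. \<psi> j)" for Q
  have kphi: "Poly_Mapping.keys (\<phi> Q) \<subseteq> Box m n" for Q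
  proof
    fix \<gamma> assume "\<gamma> \<in> Poly_Mapping.keys (\<phi> Q)"
    then obtain j where "j \<in> {j\<in>J. qq j = Q}" "\<gamma> \<in> Poly_Mapping.keys (\<psi> j)"
      using keys_sum[of \<psi> "{j\<in>J. qq j = Q}"] unfolding \<phi>_def by blast
    then show "\<gamma> \<in> Box m n" using entB(1) unfolding \<psi>_def by (auto split: if_splits)
  qed
  have g0: "(\<lambda>_. 0::real) \<in> grid m n" by (auto simp: grid_def)
  have claim: "\<forall>Q. qs n Q = s \<longrightarrow> (\<forall>i\<ge>n. Q i = 0) \<longrightarrow> \<phi> Q = 0" if "s \<le> k - 1" for s
    using that
  proof (induction s rule: less_induct)
    case (less s)
    define Js where "Js = {j\<in>J. s \<le> qs n (qq j)}"
    have finJs: "finite Js" using finJ unfolding Js_def by auto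
    have low: "(\<Sum>j\<in>J - Js. Gq m n (qq j) * \<psi> j) = 0"
    proof -
      have "(\<Sum>j\<in>J - Js. Gq m n (qq j) * \<psi> j) =
          (\<Sum>Q\<in>qq ` (J - Js). \<Sum>j\<in>{j\<in>J - Js. qq j = Q}. Gq m n (qq j) * \<psi> j)"
        using finJ by (subst sum.image_gen[of "J - Js" _ qq]) auto
      also have "\<dots> = (\<Sum>Q\<in>qq ` (J - Js). Gq m n Q * \<phi> Q)"
      proof (intro sum.cong refl)
        fix Q assume "Q \<in> qq ` (J - Js)"
        then have "qs n Q < s" unfolding Js_def by auto
        then have "{j\<in>J - Js. qq j = Q} = {j\<in>J. qq j = Q}" unfolding Js_def by auto
        then show "(\<Sum>j\<in>{j\<in>J - Js. qq j = Q}. Gq m n (qq j) * \<psi> j) = Gq m n Q * \<phi> Q"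
          unfolding \<phi>_def by (simp add: sum_distrib_left)
      qed
      also have "\<dots> = 0"
      proof (intro sum.neutral ballI)
        fix Q assume Q: "Q \<in> qq ` (J - Js)"
        then obtain j where j0: "j \<in> J - Js" "qq j = Q" by blast
        then have j: "j \<in> J" "qq j = Q" "qs n Q < s" unfolding Js_def by auto
        have "\<phi> Q = 0" using less.IH[of "qs n Q"] j less.prems entB(2)[OF j(1)] by auto
        then show "Gq m n Q * \<phi> Q = 0" by simp
      qed
      finally show ?thesis .
    qed
    have RJs: "R = (\<Sum>j\<in>Js. Gq m n (qq j) * \<psi> j)"
    proof -
      have "Js \<subseteq> J" unfolding Js_def by auto
      then have "(\<Sum>j\<in>J. Gq m n (qq j) * \<psi> j) = (\<Sum>j\<in>Js. Gq m n (qq j) * \<psi> j) + (\<Sum>j\<in>J - Js. Gq m n (qq j) * \<psi> j)"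
        using finJ by (metis (no_types, lifting) add.commute sum.subset_diff)
      then show ?thesis using Rrep low by simp
    qed
    have hyp: "\<forall>j\<in>Js. s \<le> qs n (qq j) \<and> (\<forall>i\<ge>n. qq j i = 0)"
      using entB(2) unfolding Js_def by auto
    show ?case
    proof (intro allI impI)
      fix Q assume Q: "qs n Q = s" "\<forall>i\<ge>n. Q i = 0"
      have seteq: "{j\<in>Js. qq j = Q} = {j\<in>J. qq j = Q}" using Q unfolding Js_def by auto
      have ev: "meval (\<phi> Q) a = 0" if a: "a \<in> grid m n" "zm n (Suc s) R a" for a
      proof -
        have "(\<Sum>j\<in>{j\<in>Js. qq j = Q}. meval (\<psi> j) a) = 0"
          using lemD[OF a(1) finJs hyp _ Q(1) Q(2)] a(2) RJs by simp
        then show ?thesis unfolding \<phi>_def meval_sum seteq .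
      qed
      have ev1: "meval (\<phi> Q) a = 0" if a: "a \<in> grid m n - {\<lambda>_. 0}" for a
      proof -
        have "zm n k R a" using C a unfolding cnd_def by blast
        then have "zm n (Suc s) R a" by (rule zm_mono) (use less.prems k in linarith)
        then show ?thesis using ev a by blast
      qed
      show "\<phi> Q = 0"
      proof (cases "s = k - 1")
        case True
        have "Poly_Mapping.lookup (\<phi> Q) (M1 m n) = 0"
        proof -
          have "Poly_Mapping.lookup (\<phi> Q) (M1 m n) = (\<Sum>j\<in>{j\<in>J. qq j = Q}. Poly_Mapping.lookup (\<psi> j) (M1 m n))"
            unfolding \<phi>_def by (simp add: lookup_sum)
          also have "\<dots> = 0"
          proof (intro sum.neutral ballI)
            fix j assume j: "j \<in> {j\<in>J. qq j = Q}"
            then have "rr j \<noteq> M1 m n" using entB(4)[of j] Q(1) True by auto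
            then show "Poly_Mapping.lookup (\<psi> j) (M1 m n) = 0" unfolding \<psi>_def by (simp add: lookup_single)
          qed
          finally show ?thesis .
        qed
        then show ?thesis using alonB[OF kphi] ev1 by blast
      next
        case False
        then have sk: "Suc s \<le> k - 1" using less.prems by simp
        have "meval (\<phi> Q) a = 0" if a: "a \<in> grid m n" for a
        proof (cases "a = (\<lambda>_. 0)")
          case True
          have "zm n (k - 1) R (\<lambda>_. 0)" using C unfolding cnd_def by blast
          then have "zm n (Suc s) R (\<lambda>_. 0)" using sk by (rule zm_mono)
          then show ?thesis using ev g0 True by blast
        next
          case False then show ?thesis using ev1 a by blast
        qed
        then show ?thesis using alonA[OF kphi] by blast
      qed
    qed
  qed
  have "R = (\<Sum>Q\<in>qq ` J. \<Sum>j\<in>{j\<in>J. qq j = Q}. Gq m n (qq j) * \<psi> j)"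
    using Rrep finJ by (simp add: sum.image_gen[of J _ qq])
  also have "\<dots> = (\<Sum>Q\<in>qq ` J. Gq m n Q * \<phi> Q)"
    unfolding \<phi>_def by (intro sum.cong refl) (simp add: sum_distrib_left)
  also have "\<dots> = 0"
  proof (intro sum.neutral ballI)
    fix Q assume "Q \<in> qq ` J"
    then obtain j where j: "j \<in> J" "qq j = Q" by auto
    have "\<phi> Q = 0" using claim[OF entB(3)[OF j(1)]] entB(2)[OF j(1)] j(2) by auto
    then show "Gq m n Q * \<phi> Q = 0" by simp
  qed
  finally show ?thesis .
qed



theorem corollary3p4:
  fixes m n k :: nat and P :: mpoly
  assumes "m \<ge> 1" and "n \<ge> 1" and "k \<ge> 2" and "mvars P \<subseteq> {..<n}"
  shows "(\<exists>!P0. reduced n m k P0 \<and>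
            (\<forall>a\<in>grid m n - {(\<lambda>_. 0)}. zero_mult_ge n k (P - P0) a) \<and>
            zero_mult_ge n (k - 1) (P - P0) (\<lambda>_. 0))
       \<and> (\<forall>P0. reduced n m k P0 \<and>
            (\<forall>a\<in>grid m n - {(\<lambda>_. 0)}. zero_mult_ge n k (P - P0) a) \<and>
            zero_mult_ge n (k - 1) (P - P0) (\<lambda>_. 0) \<longrightarrow> mdeg P0 \<le> mdeg P)"
proof -
  obtain P0 where P0: "\<forall>\<gamma>\<in>Poly_Mapping.keys P0. good m n k \<gamma> \<and> mon_deg \<gamma> \<le> mdeg P" "cnd m n k (P - P0)"
    using existence[OF assms(4) assms(3)] by blast
  have r0: "reduced n m k P0" using P0(1) by (simp add: reduced_iff)
  have d0: "mdeg P0 \<le> mdeg P" using P0(1) by (simp add: mdeg_le_iff)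
  have un: "P1 = P0" if "reduced n m k P1" "cnd m n k (P - P1)" for P1
  proof -
    have "\<forall>\<gamma>\<in>Poly_Mapping.keys (P1 - P0). good m n k \<gamma>"
      using that(1) r0 keys_diff[of P1 P0] unfolding reduced_iff by blast
    moreover have "cnd m n k (P1 - P0)"
      using cnd_diff[OF P0(2) that(2)] by (simp add: algebra_simps)
    ultimately have "P1 - P0 = 0" using uniq[OF assms(3)] by blast
    then show ?thesis by simp
  qed
  show ?thesis
    unfolding cnd_def[symmetric]
    using r0 d0 P0(2) un by blast
qed


end
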